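(* Let $K$ be a positive even integer, $J\ge 0$ a real number and $\epsilon>0$. Let $|\Psi\rangle\in(\mathbb C^2)^{\otimes K}$ be a unit vector chosen uniformly at random (according to the unitarily invariant probability measure on pure states), and let $F^{(K,J)}_\Psi:=\langle\Psi|\,\mathcal E^{(K)}_J(|\Psi\rangle\langle\Psi|)\,|\Psi\rangle$. Then $$\mathrm{Prob}\big[F^{(K,J)}_\Psi<1-\epsilon\big]<\frac{2(K+1)}{\epsilon}\exp\!\Big[-\frac{2J^2}{K}\Big].$$
   Context: For $K$ qubits, decompose $(\mathbb C^2)^{\otimes K}\cong\bigoplus_{j=0}^{K/2}\mathcal R_j\otimes\mathcal M_{jK}$ (Schur–Weyl decomposition), where $j$ is the total angular momentum quantum number, $\mathcal R_j$ carries the spin-$j$ irreducible representation of $SU(2)$ (dimension $2j+1$) and $\mathcal M_{jK}$ is the multiplicity space, of dimension $m_{jK}=\frac{2j+1}{K/2+j+1}\binom{K}{K/2+j}$; equivalently $\mathcal R_j\otimes\mathcal M_{jK}$ is the eigenspace of the total squared angular momentum $\big(\sum_{k=1}^K \sigma^{(k)}/2\big)^2$ with eigenvalue $j(j+1)$. Let $P^{(K)}_J$ be the orthogonal projector onto $\mathcal H^{(K)}_J:=\bigoplus_{j\le J}\mathcal R_j\otimes\mathcal M_{jK}$, and fix a density matrix $\rho_0$ supported in $\mathcal H^{(K)}_J$. The encoding channel is $\mathcal E^{(K)}_J(\rho):=P^{(K)}_J\rho P^{(K)}_J+\mathrm{Tr}[(I^{\otimes K}-P^{(K)}_J)\rho]\,\rho_0$.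 *)

theory Defs
  imports "HOL-Probability.Probability"
begin

(* Qubits are labelled by a finite type 'n, K = CARD('n).
   Computational basis states of (C^2)^{\<otimes>K} are bit assignments 'n \<Rightarrow> bool
   (False = |0>, True = |1>, sigma_z|0> = |0>). *)

type_synonym 'n qstate = "complex ^ ('n \<Rightarrow> bool)"
type_synonym 'n qop = "complex ^ ('n \<Rightarrow> bool) ^ ('n \<Rightarrow> bool)"

definition cinner :: "complex ^ 'i \<Rightarrow> complex ^ 'i \<Rightarrow> complex" where
  "cinner v w = (\<Sum>i\<in>UNIV. cnj (v $ i) * w $ i)"

definition adjoint_mat :: "complex ^ 'i ^ 'i \<Rightarrow> complex ^ 'i ^ 'i" where
  "adjoint_mat A = (\<chi> i j. cnj (A $ j $ i))"

definition smult_mat :: "complex \<Rightarrow> complex ^ 'i ^ 'i \<Rightarrow> complex ^ 'i ^ 'i" where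
  "smult_mat c A = (\<chi> i j. c * A $ i $ j)"

definition mtrace :: "complex ^ 'i ^ 'i \<Rightarrow> complex" where
  "mtrace A = (\<Sum>i\<in>UNIV. A $ i $ i)"

definition outer :: "complex ^ 'i \<Rightarrow> complex ^ 'i ^ 'i" where
  "outer v = (\<chi> i j. v $ i * cnj (v $ j))"

definition unitary_mat :: "complex ^ 'i ^ 'i \<Rightarrow> bool" where
  "unitary_mat U \<longleftrightarrow> adjoint_mat U ** U = mat 1"

definition density_matrix :: "complex ^ 'i ^ 'i \<Rightarrow> bool" where
  "density_matrix \<rho> \<longleftrightarrow> adjoint_mat \<rho> = \<rho> \<and> (\<forall>v. 0 \<le> Re (cinner v (\<rho> *v v))) \<and> mtrace \<rho> = 1"

definition sigma_x :: "'n::finite \<Rightarrow> 'n qop" where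
  "sigma_x k = (\<chi> a b. if b = a(k := \<not> a k) then 1 else 0)"

definition sigma_y :: "'n::finite \<Rightarrow> 'n qop" where
  "sigma_y k = (\<chi> a b. if b = a(k := \<not> a k) then (if a k then \<i> else - \<i>) else 0)"

definition sigma_z :: "'n::finite \<Rightarrow> 'n qop" where
  "sigma_z k = (\<chi> a b. if b = a then (if a k then -1 else 1) else 0)"

definition spin_x :: "'n::finite qop" where
  "spin_x = smult_mat (1/2) (\<Sum>k\<in>UNIV. sigma_x k)"
definition spin_y :: "'n::finite qop" where
  "spin_y = smult_mat (1/2) (\<Sum>k\<in>UNIV. sigma_y k)"
definition spin_z :: "'n::finite qop" where
  "spin_z = smult_mat (1/2) (\<Sum>k\<in>UNIV. sigma_z k)"

definition total_spin_sq :: "'n::finite qop" where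
  "total_spin_sq = spin_x ** spin_x + spin_y ** spin_y + spin_z ** spin_z"

definition low_spin_space :: "real \<Rightarrow> 'n::finite qstate set" where
  "low_spin_space J = span (\<Union>j\<in>{j. 0 \<le> j \<and> j \<le> J}.
      {v. total_spin_sq *v v = complex_of_real (j * (j + 1)) *s v})"

definition orth_proj_onto :: "(complex ^ 'i) set \<Rightarrow> complex ^ 'i ^ 'i" where
  "orth_proj_onto S = (THE P. P ** P = P \<and> adjoint_mat P = P \<and> range (\<lambda>v. P *v v) = S)"

definition proj_J :: "real \<Rightarrow> 'n::finite qop" where
  "proj_J J = orth_proj_onto (low_spin_space J)"

definition encoding_channel :: "real \<Rightarrow> 'n::finite qop \<Rightarrow> 'n qop \<Rightarrow> 'n qop" where
  "encoding_channel J \<rho>0 \<rho> =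
     proj_J J ** \<rho> ** proj_J J + smult_mat (mtrace ((mat 1 - proj_J J) ** \<rho>)) \<rho>0"

definition fidelity :: "real \<Rightarrow> 'n::finite qop \<Rightarrow> 'n qstate \<Rightarrow> real" where
  "fidelity J \<rho>0 \<psi> = Re (cinner \<psi> (encoding_channel J \<rho>0 (outer \<psi>) *v \<psi>))"

definition unitarily_invariant_pure_state_measure :: "(complex ^ 'i::finite) measure \<Rightarrow> bool" where
  "unitarily_invariant_pure_state_measure M \<longleftrightarrow>
     prob_space M \<and> sets M = sets borel \<and> emeasure M (sphere 0 1) = 1 \<and>
     (\<forall>U. unitary_mat U \<longrightarrow> distr M borel (\<lambda>v. U *v v) = M)"

end

theory Submission
  imports Defs
begin

definition flip :: "'n \<Rightarrow> ('n \<Rightarrow> bool) \<Rightarrow> ('n \<Rightarrow> bool)" where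
  "flip k a = a(k := \<not> a k)"

lemma flip_flip[simp]: "flip k (flip k a) = a" by (auto simp: flip_def)
lemma flip_same[simp]: "flip k a k = (\<not> a k)" by (simp add: flip_def)
lemma flip_other: "l \<noteq> k \<Longrightarrow> flip k a l = a l" by (simp add: flip_def)
lemma flip_comm: "flip k (flip l a) = flip l (flip k a)" by (auto simp: flip_def fun_eq_iff)
lemma flip_inj: "flip k a = flip k b \<longleftrightarrow> a = b" by (metis flip_flip)

definition Sp :: "'n::finite qop" where
  "Sp = (\<chi> a b. \<Sum>k\<in>UNIV. if b = flip k a \<and> \<not> a k then 1 else 0)"
definition Sm :: "'n::finite qop" where
  "Sm = (\<chi> a b. \<Sum>k\<in>UNIV. if b = flip k a \<and> a k then 1 else 0)"
definition cnt :: "('n::finite \<Rightarrow> bool) \<Rightarrow> nat" where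
  "cnt a = card {k. a k}"
definition wt :: "('n::finite \<Rightarrow> bool) \<Rightarrow> real" where
  "wt a = real CARD('n) / 2 - real (cnt a)"
definition Sz :: "'n::finite qop" where
  "Sz = (\<chi> a b. if b = a then complex_of_real (wt a) else 0)"

lemma sum_flip_delta:
  fixes v :: "complex ^ ('n::finite \<Rightarrow> bool)"
  shows "(\<Sum>b\<in>UNIV. (if b = flip k a \<and> P then 1 else 0) * v $ b) = (if P then v $ flip k a else 0)"
  by (cases P) (auto simp: if_distrib if_distribR cong: if_cong)

lemma Sp_apply: "(Sp *v v) $ a = (\<Sum>k\<in>{k. \<not> a k}. v $ flip k a)"
proof -
  have "(Sp *v v) $ a = (\<Sum>b\<in>UNIV. (\<Sum>k\<in>UNIV. if b = flip k a \<and> \<not> a k then 1 else 0) * v $ b)"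
    by (simp add: Sp_def matrix_vector_mult_def)
  also have "\<dots> = (\<Sum>k\<in>UNIV. \<Sum>b\<in>UNIV. (if b = flip k a \<and> \<not> a k then 1 else 0) * v $ b)"
    unfolding sum_distrib_right by (rule sum.swap)
  also have "\<dots> = (\<Sum>k\<in>UNIV. if \<not> a k then v $ flip k a else 0)"
    by (simp only: sum_flip_delta)
  also have "\<dots> = (\<Sum>k\<in>{k. \<not> a k}. v $ flip k a)"
    by (simp add: sum.If_cases Int_def)
  finally show ?thesis .
qed

lemma Sm_apply: "(Sm *v v) $ a = (\<Sum>k\<in>{k. a k}. v $ flip k a)"
proof -
  have "(Sm *v v) $ a = (\<Sum>b\<in>UNIV. (\<Sum>k\<in>UNIV. if b = flip k a \<and> a k then 1 else 0) * v $ b)"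
    by (simp add: Sm_def matrix_vector_mult_def)
  also have "\<dots> = (\<Sum>k\<in>UNIV. \<Sum>b\<in>UNIV. (if b = flip k a \<and> a k then 1 else 0) * v $ b)"
    unfolding sum_distrib_right by (rule sum.swap)
  also have "\<dots> = (\<Sum>k\<in>UNIV. if a k then v $ flip k a else 0)"
    by (simp only: sum_flip_delta)
  also have "\<dots> = (\<Sum>k\<in>{k. a k}. v $ flip k a)"
    by (simp add: sum.If_cases Int_def)
  finally show ?thesis .
qed

lemma Sz_apply: "(Sz *v v) $ a = complex_of_real (wt a) * v $ a"
  by (simp add: Sz_def matrix_vector_mult_def if_distrib if_distribR cong: if_cong)

lemma T_flip_F: "\<not> a k \<Longrightarrow> {l. flip k a l} = insert k {l. a l}"
  by (auto simp: flip_def)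
lemma T_flip_T: "a k \<Longrightarrow> {l. flip k a l} = {l. a l} - {k}"
  by (auto simp: flip_def)
lemma F_flip_T: "a k \<Longrightarrow> {l. \<not> flip k a l} = insert k {l. \<not> a l}"
  by (auto simp: flip_def)

lemma wt_flip_F: "\<not> a k \<Longrightarrow> wt (flip k a) = wt a - 1"
  unfolding wt_def cnt_def T_flip_F by (subst card_insert_disjoint) auto
lemma wt_flip_T: "a k \<Longrightarrow> wt (flip k a) = wt a + 1"
proof -
  assume "a k"
  then have "card {l. a l} \<ge> 1" by (metis (mono_tags) One_nat_def Suc_leI card_gt_0_iff empty_iff finite mem_Collect_eq)
  with \<open>a k\<close> show ?thesis
    unfolding wt_def cnt_def T_flip_T[of a k, OF \<open>a k\<close>] by (subst card_Diff_singleton) (auto simp: of_nat_diff)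
qed

lemma card_TF: "card {l. (a::'n::finite \<Rightarrow> bool) l} + card {l. \<not> a l} = CARD('n)"
proof -
  have "{l. a l} \<union> {l. \<not> a l} = (UNIV::'n set)" by auto
  then show ?thesis by (metis card_Un_disjoint disjoint_iff finite mem_Collect_eq)
qed

lemma comm_z_p: "Sz *v (Sp *v v) = Sp *v (Sz *v v) + Sp *v v"
  by (simp add: vec_eq_iff Sz_apply Sp_apply sum_distrib_left wt_flip_F
       sum.distrib[symmetric] algebra_simps)

lemma comm_z_m: "Sz *v (Sm *v v) = Sm *v (Sz *v v) - Sm *v v"
  by (simp add: vec_eq_iff Sz_apply Sm_apply sum_distrib_left wt_flip_T
       sum_subtractf[symmetric] algebra_simps)

lemma comm_p_m: "Sp *v (Sm *v (v :: 'n::finite qstate)) = Sm *v (Sp *v v) + Sz *v v + Sz *v v"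
proof -
  have "(Sp *v (Sm *v v)) $ a = (Sm *v (Sp *v v)) $ a + (Sz *v v) $ a + (Sz *v v) $ a" for a
  proof -
    let ?F = "{l. \<not> a l}" and ?T = "{l. a l}"
    have A: "(Sp *v (Sm *v v)) $ a = of_nat (card ?F) * v $ a + (\<Sum>k\<in>?F. \<Sum>l\<in>?T. v $ flip l (flip k a))"
    proof -
      have "(Sp *v (Sm *v v)) $ a = (\<Sum>k\<in>?F. v $ a + (\<Sum>l\<in>?T. v $ flip l (flip k a)))"
        unfolding Sp_apply Sm_apply
        by (intro sum.cong refl) (simp add: T_flip_F)
      then show ?thesis by (simp add: sum.distrib)
    qed
    have B: "(Sm *v (Sp *v v)) $ a = of_nat (card ?T) * v $ a + (\<Sum>k\<in>?T. \<Sum>l\<in>?F. v $ flip l (flip k a))"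
    proof -
      have "(Sm *v (Sp *v v)) $ a = (\<Sum>k\<in>?T. v $ a + (\<Sum>l\<in>?F. v $ flip l (flip k a)))"
        unfolding Sp_apply Sm_apply
        by (intro sum.cong refl) (simp add: F_flip_T)
      then show ?thesis by (simp add: sum.distrib)
    qed
    have C: "(\<Sum>k\<in>?F. \<Sum>l\<in>?T. v $ flip l (flip k a)) = (\<Sum>k\<in>?T. \<Sum>l\<in>?F. v $ flip l (flip k a))"
      by (subst sum.swap) (simp add: flip_comm)
    have D: "real (card ?F) = real (card ?T) + 2 * wt a"
    proof -
      have "real (card ?T) + real (card ?F) = real CARD('n)" using card_TF[of a] by (metis of_nat_add)
      then show ?thesis unfolding wt_def cnt_def by (simp add: Collect_mono_iff)
    qed
    have D': "(of_nat (card ?F) :: complex) = of_nat (card ?T) + 2 * complex_of_real (wt a)"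
      using arg_cong[OF D, of complex_of_real] by simp
    show ?thesis unfolding A B C Sz_apply D' by (simp add: algebra_simps)
  qed
  then show ?thesis by (simp add: vec_eq_iff)
qed

lemma smult_mat_apply: "smult_mat c A *v v = c *s (A *v v)"
  by (simp add: smult_mat_def matrix_vector_mult_def vec_eq_iff sum_distrib_left mult.assoc)

lemma sum_mat_apply: "(\<Sum>k\<in>S. A k) *v v = (\<Sum>k\<in>S. A k *v v)"
  by (induction S rule: infinite_finite_induct) (auto simp: matrix_vector_mult_add_rdistrib)

lemma sum_split_pred: "(\<Sum>k\<in>(UNIV::'n::finite set). f k) = (\<Sum>k\<in>{k. P k}. f k) + (\<Sum>k\<in>{k. \<not> P k}. f k)"
proof -
  have "(UNIV::'n set) = {k. P k} \<union> {k. \<not> P k}" by auto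
  then show ?thesis by (metis (no_types, lifting) disjoint_iff finite mem_Collect_eq sum.union_disjoint)
qed

lemma sigma_x_apply: "(sigma_x k *v v) $ a = v $ flip k a"
  by (simp add: sigma_x_def matrix_vector_mult_def flip_def if_distrib if_distribR cong: if_cong)
lemma delta_sum: "(\<Sum>b\<in>UNIV. (if b = x then c else 0) * (v::complex^'i::finite) $ b) = c * v $ x"
proof -
  have "(\<Sum>b\<in>UNIV. (if b = x then c else 0) * v $ b) = (\<Sum>b\<in>UNIV. if b = x then c * v $ b else 0)"
    by (intro sum.cong) auto
  then show ?thesis by simp
qed

lemma sigma_y_apply: "(sigma_y k *v v) $ a = (if a k then \<i> else - \<i>) * v $ flip k a"
  unfolding sigma_y_def matrix_vector_mult_def flip_def[symmetric] by (simp only: vec_lambda_beta delta_sum)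
lemma sigma_z_apply: "(sigma_z k *v v) $ a = (if a k then -1 else 1) * v $ a"
  unfolding sigma_z_def matrix_vector_mult_def by (simp only: vec_lambda_beta delta_sum)

lemma spin_x_apply: "spin_x *v v = (1/2) *s (Sp *v v + Sm *v v)"
proof -
  have c: "(spin_x *v v) $ a = (1/2) * ((Sp *v v) $ a + (Sm *v v) $ a)" for a
    unfolding spin_x_def smult_mat_apply sum_mat_apply Sp_apply Sm_apply
    by (simp add: sum_component sigma_x_apply sum_split_pred[of _ a] add.commute)
  show ?thesis by (intro iffD2[OF vec_eq_iff, rule_format]) (simp only: vector_scalar_mult_def vec_lambda_beta c vector_add_component)
qed

lemma spin_y_apply: "spin_y *v v = (\<i>/2) *s (Sm *v v - Sp *v v)"
proof -
  have c: "(spin_y *v v) $ a = (\<i>/2) * ((Sm *v v) $ a - (Sp *v v) $ a)" for a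
  proof -
    have "(\<Sum>k\<in>UNIV. (sigma_y k *v v) $ a) = (\<Sum>k\<in>{k. a k}. \<i> * v $ flip k a) + (\<Sum>k\<in>{k. \<not> a k}. - \<i> * v $ flip k a)"
      unfolding sigma_y_apply by (subst sum_split_pred[of _ a]) (intro arg_cong2[where f="(+)"] sum.cong; simp)
    then show ?thesis
      unfolding spin_y_def smult_mat_apply sum_mat_apply Sp_apply Sm_apply
      by (simp add: sum_component sum_negf sum_distrib_left[symmetric] algebra_simps)
  qed
  show ?thesis by (intro iffD2[OF vec_eq_iff, rule_format]) (simp only: vector_scalar_mult_def vec_lambda_beta c vector_minus_component)
qed

lemma spin_z_eq: "(spin_z :: 'n::finite qop) = Sz"
proof -
  have "(\<Sum>k\<in>UNIV. if a k then -1 else 1) = complex_of_real (2 * wt a)" for a :: "'n \<Rightarrow> bool"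
  proof -
    have "(\<Sum>k\<in>UNIV. if a k then -1 else (1::complex)) = (\<Sum>k\<in>{k. a k}. -1) + (\<Sum>k\<in>{k. \<not> a k}. 1)"
      by (subst sum_split_pred[of _ a]) (intro arg_cong2[where f="(+)"] sum.cong; simp)
    also have "\<dots> = of_nat (card {k. \<not> a k}) - of_nat (card {k. a k})" by simp
    also have "\<dots> = complex_of_real (2 * wt a)"
    proof -
      have "real (card {k. a k}) + real (card {k. \<not> a k}) = real CARD('n)" using card_TF[of a] by (metis of_nat_add)
      then have "real (card {k. \<not> a k}) - real (card {k. a k}) = 2 * wt a" unfolding wt_def cnt_def by (simp add: Collect_mono_iff)
      then show ?thesis by (metis of_real_diff of_real_of_nat_eq)
    qed
    finally show ?thesis .
  qed
  note tw = this
  have s: "(\<Sum>k\<in>UNIV. (if a k then -1 else 1) * v $ a) = (2 * complex_of_real (wt a)) * v$a" for a :: "'n \<Rightarrow> bool" and v :: "'n qstate"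
    by (subst sum_distrib_right[symmetric]) (simp add: tw)
  have "(spin_z *v v) $ a = (Sz *v v) $ a" for v :: "'n qstate" and a
    unfolding spin_z_def smult_mat_apply sum_mat_apply Sz_apply
    by (simp only: sum_component sigma_z_apply vector_scalar_mult_def vec_lambda_beta s) simp
  then show ?thesis by (simp add: matrix_eq vec_eq_iff)
qed

lemma S2_apply: "total_spin_sq *v v = Sm *v (Sp *v v) + Sz *v (Sz *v v) + Sz *v v"
proof -
  have "total_spin_sq *v v = spin_x *v (spin_x *v v) + spin_y *v (spin_y *v v) + Sz *v (Sz *v v)"
    by (simp add: total_spin_sq_def matrix_vector_mult_add_rdistrib matrix_vector_mul_assoc spin_z_eq)
  also have "\<dots> = (1/4) *s (Sp *v (Sp *v v) + Sp *v (Sm *v v) + Sm *v (Sp *v v) + Sm *v (Sm *v v))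
      - (1/4) *s (Sm *v (Sm *v v) - Sm *v (Sp *v v) - Sp *v (Sm *v v) + Sp *v (Sp *v v)) + Sz *v (Sz *v v)"
    unfolding spin_x_apply spin_y_apply
    by (simp add: vector_scalar_commute matrix_vector_right_distrib matrix_vector_mult_diff_distrib vec_eq_iff algebra_simps)
  also have "\<dots> = Sm *v (Sp *v v) + Sz *v (Sz *v v) + Sz *v v"
    unfolding comm_p_m by (simp add: vec_eq_iff algebra_simps)
  finally show ?thesis .
qed


lemma S2_Sz: "total_spin_sq *v (Sz *v v) = Sz *v (total_spin_sq *v (v::'n::finite qstate))"
  unfolding S2_apply
  by (simp only: comm_z_p comm_z_m matrix_vector_right_distrib matrix_vector_mult_diff_distrib)
     (simp only: vec_eq_iff vector_add_component vector_minus_component, simp add: algebra_simps)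

lemma S2_Sm: "total_spin_sq *v (Sm *v v) = Sm *v (total_spin_sq *v (v::'n::finite qstate))"
  unfolding S2_apply
  by (simp only: comm_z_p comm_z_m comm_p_m matrix_vector_right_distrib matrix_vector_mult_diff_distrib)
     (simp only: vec_eq_iff vector_add_component vector_minus_component, simp add: algebra_simps)

lemma cinner_Sm: "cinner (Sm *v u) w = cinner u (Sp *v (w::'n::finite qstate))"
proof -
  have "cinner (Sm *v u) w = (\<Sum>a\<in>UNIV. \<Sum>k\<in>UNIV. if a k then cnj (u $ flip k a) * w $ a else 0)"
    unfolding cinner_def Sm_apply
    by (simp add: sum_distrib_right sum.If_cases Int_def)
  also have "\<dots> = (\<Sum>k\<in>UNIV. \<Sum>a\<in>UNIV. if a k then cnj (u $ flip k a) * w $ a else 0)"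
    by (rule sum.swap)
  also have "\<dots> = (\<Sum>k\<in>UNIV. \<Sum>b\<in>UNIV. if \<not> b k then cnj (u $ b) * w $ flip k b else 0)"
  proof (rule sum.cong[OF refl])
    fix k
    show "(\<Sum>a\<in>UNIV. if a k then cnj (u $ flip k a) * w $ a else 0) =
          (\<Sum>b\<in>UNIV. if \<not> b k then cnj (u $ b) * w $ flip k b else 0)"
      by (rule sum.reindex_bij_witness[where i="flip k" and j="flip k"]) auto
  qed
  also have "\<dots> = (\<Sum>b\<in>UNIV. \<Sum>k\<in>UNIV. if \<not> b k then cnj (u $ b) * w $ flip k b else 0)"
    by (rule sum.swap)
  also have "\<dots> = cinner u (Sp *v w)"
    unfolding cinner_def Sp_apply
    by (simp add: sum_distrib_left sum.If_cases Int_def)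
  finally show ?thesis .
qed

lemma cinner_Sz: "cinner (Sz *v u) w = cinner u (Sz *v (w::'n::finite qstate))"
  unfolding cinner_def Sz_apply by (simp add: mult_ac)

lemma cinner_cnj: "cnj (cinner u w) = cinner w u"
  unfolding cinner_def by (simp add: mult.commute)

lemma cinner_Sp: "cinner (Sp *v u) w = cinner u (Sm *v (w::'n::finite qstate))"
  by (metis cinner_Sm cinner_cnj)

lemma highest_weight:
  assumes "Sz *v v = complex_of_real m *s v" and "Sp *v v = 0"
  shows "total_spin_sq *v v = complex_of_real (m * (m + 1)) *s (v::'n::finite qstate)"
  unfolding S2_apply assms(2) assms(1) vector_scalar_commute matrix_vector_mult_0_right
  by (simp add: vec_eq_iff algebra_simps)


lemma cinner_axis_left: "cinner (axis b 1) w = w $ b"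
  unfolding cinner_def axis_def by (simp add: if_distrib if_distribR cong: if_cong)

lemma mat_axis: "(A *v axis a 1) $ b = A $ b $ a"
  unfolding matrix_vector_mult_def axis_def by (simp add: if_distrib if_distribR cong: if_cong)

lemma cinner_adjoint: "cinner (A *v u) w = cinner u (adjoint_mat A *v w)"
  unfolding cinner_def adjoint_mat_def matrix_vector_mult_def
  by (simp add: sum_distrib_left sum_distrib_right mult_ac) (rule sum.swap)

lemma cinner_add_right: "cinner u (v + w) = cinner u v + cinner u w"
  unfolding cinner_def by (simp add: sum.distrib algebra_simps)
lemma cinner_add_left: "cinner (u + v) w = cinner u w + cinner v w"
  unfolding cinner_def by (simp add: sum.distrib algebra_simps)
lemma cinner_diff_right: "cinner u (v - w) = cinner u v - cinner u w"
  unfolding cinner_def by (simp add: sum_subtractf algebra_simps)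
lemma cinner_diff_left: "cinner (u - v) w = cinner u w - cinner v w"
  unfolding cinner_def by (simp add: sum_subtractf algebra_simps)
lemma cinner_scale_left: "cinner (c *s u) w = cnj c * cinner u w"
  unfolding cinner_def by (simp add: sum_distrib_left mult_ac)
lemma cinner_scale_right: "cinner u (c *s w) = c * cinner u w"
  unfolding cinner_def by (simp add: sum_distrib_left mult_ac)
lemma cinner_zero_left[simp]: "cinner 0 w = 0" unfolding cinner_def by simp
lemma cinner_zero_right[simp]: "cinner w 0 = 0" unfolding cinner_def by simp

lemma inner_cinner: "inner x y = Re (cinner x (y :: complex ^ 'i :: finite))"
  unfolding inner_vec_def cinner_def inner_complex_def by (simp add: Re_sum)

lemma hermitian_of_adjoint:
  assumes "adjoint_mat P = P" shows "cinner (P *v u) w = cinner u (P *v w)"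
  using cinner_adjoint[of P u w] assms by simp

lemma linear_scale_vec: "linear (\<lambda>v::complex^'i::finite. c *s v)"
  by (rule linearI) (simp_all add: vec_eq_iff algebra_simps scaleR_conv_of_real)

lemma span_stable:
  assumes "linear f" "\<And>x. x \<in> X \<Longrightarrow> f x \<in> X" "x \<in> span X"
  shows "f x \<in> span X"
proof -
  have "f x \<in> f ` span X" using assms(3) by blast
  also have "\<dots> = span (f ` X)" using span_linear_image[OF assms(1)] by simp
  also have "\<dots> \<subseteq> span X" using assms(2) by (intro span_mono) blast
  finally show ?thesis .
qed

lemma proj_unique_exists:
  fixes S :: "(complex ^ 'i::finite) set"
  assumes sub: "subspace S" and cl: "\<And>c v. v \<in> S \<Longrightarrow> c *s v \<in> S"
  shows "\<exists>!P. P ** P = P \<and> adjoint_mat P = P \<and> range (\<lambda>v. P *v v) = S"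
proof -
  have spanS: "span S = S" using sub by (simp add: span_eq_iff)
  have dec: "\<exists>y. y \<in> S \<and> (\<forall>w\<in>S. inner (x - y) w = 0)" for x
  proof -
    obtain y z where "y \<in> span S" "\<And>w. w \<in> span S \<Longrightarrow> orthogonal z w" "x = y + z"
      using orthogonal_subspace_decomp_exists[of S x] by blast
    then show ?thesis using spanS by (auto simp: orthogonal_def)
  qed
  define p where "p x = (SOME y. y \<in> S \<and> (\<forall>w\<in>S. inner (x - y) w = 0))" for x
  have pS: "p x \<in> S" and porth: "\<And>w. w \<in> S \<Longrightarrow> inner (x - p x) w = 0" for x
    using someI_ex[OF dec[of x]] unfolding p_def[symmetric] by auto
  have uniq: "p x = y" if "y \<in> S" "\<And>w. w \<in> S \<Longrightarrow> inner (x - y) w = 0" for x y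
  proof -
    have d: "p x - y \<in> S" using pS that(1) sub by (simp add: subspace_diff)
    have "inner (p x - y) (p x - y) = inner (x - y) (p x - y) - inner (x - p x) (p x - y)"
      by (simp add: inner_diff_left)
    also have "\<dots> = 0" using that(2)[OF d] porth[OF d] by simp
    finally show ?thesis by simp
  qed
  have pfix: "p y = y" if "y \<in> S" for y using uniq[OF that] by simp
  have corth: "cinner w z = 0" if "w \<in> S" "\<And>u. u \<in> S \<Longrightarrow> inner z u = 0" for w z
  proof -
    have r: "Re (cinner w' z) = Re (cinner z w')" for w'
      unfolding cinner_cnj[of z w', symmetric] by simp
    have "Re (cinner z w) = 0" using that(2)[OF that(1)] by (simp only: inner_cinner)
    then have "Re (cinner w z) = 0" by (simp only: r)
    moreover have "Re (cinner z (\<i> *s w)) = 0" using that(2)[OF cl[OF that(1)]] by (simp only: inner_cinner)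
    then have "Re (cinner (\<i> *s w) z) = 0" by (simp only: r)
    ultimately show ?thesis by (simp add: cinner_scale_left complex_eq_iff)
  qed
  have pc: "cinner w (x - p x) = 0" if "w \<in> S" for w x
    using corth[OF that porth] by blast
  have padd: "p (x + y) = p x + p y" for x y
  proof (rule uniq)
    show "p x + p y \<in> S" using pS sub by (simp add: subspace_add)
    fix w assume w: "w \<in> S"
    have "x + y - (p x + p y) = (x - p x) + (y - p y)" by simp
    then show "inner (x + y - (p x + p y)) w = 0" using porth[OF w, of x] porth[OF w, of y]
      by (simp only: inner_add_left)
  qed
  have psc: "p (c *s x) = c *s p x" for c x
  proof (rule uniq)
    show "c *s p x \<in> S" using cl pS by blast
    fix w assume "w \<in> S"
    have e: "c *s x - c *s p x = c *s (x - p x)" by (simp add: vec_eq_iff algebra_simps)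
    have z: "cinner (x - p x) w = 0" by (metis cinner_cnj complex_cnj_zero pc[OF \<open>w\<in>S\<close>])
    show "inner (c *s x - c *s p x) w = 0" unfolding e inner_cinner cinner_scale_left z by simp
  qed
  have plin: "Vector_Spaces.linear (*s) (*s) p"
    unfolding Vector_Spaces.linear_iff using padd psc vec.vector_space_axioms by auto
  define P where "P = matrix p"
  have Pv: "P *v x = p x" for x unfolding P_def using matrix_works[OF plin] .
  have herm: "cinner (p u) w = cinner u (p w)" for u w
  proof -
    have "cinner (p u) w = cinner (p u) (p w) + cinner (p u) (w - p w)"
      by (simp add: cinner_diff_right)
    also have "\<dots> = cinner (p u) (p w)" using pc[OF pS] by simp
    also have "\<dots> = cinner u (p w) - cinner (u - p u) (p w)" by (simp add: cinner_diff_left)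
    also have "cinner (u - p u) (p w) = 0" by (metis cinner_cnj complex_cnj_zero pc[OF pS[of w]])
    finally show ?thesis by simp
  qed
  have P1: "P ** P = P"
    by (simp add: matrix_eq matrix_vector_mul_assoc[symmetric] Pv pfix pS)
  have P2: "adjoint_mat P = P"
  proof -
    have "cnj (P $ b $ a) = P $ a $ b" for a b
    proof -
      have "P $ b $ a = cinner (axis b 1) (p (axis a 1))" by (simp add: cinner_axis_left mat_axis[symmetric] Pv)
      then have "cnj (P $ b $ a) = cinner (p (axis a 1)) (axis b 1)" by (simp add: cinner_cnj)
      also have "\<dots> = cinner (axis a 1) (p (axis b 1))" by (rule herm)
      also have "\<dots> = P $ a $ b" by (simp add: cinner_axis_left mat_axis[symmetric] Pv)
      finally show ?thesis .
    qed
    then show ?thesis by (simp add: adjoint_mat_def vec_eq_iff)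
  qed
  have P3: "range (\<lambda>v. P *v v) = S"
    using pS pfix by (auto simp: Pv image_iff) (metis)
  have unq: "P' = P" if h1: "P' ** P' = P'" and h2: "adjoint_mat P' = P'" and h3: "range (\<lambda>v. P' *v v) = S" for P'
  proof -
    have "P' *v x = p x" for x
    proof (rule sym, rule uniq)
      show "P' *v x \<in> S" using h3 by blast
      fix w assume "w \<in> S"
      then obtain u where u: "w = P' *v u" using h3 by (metis imageE)
      have "cinner (x - P' *v x) (P' *v u) = cinner (P' *v (x - P' *v x)) u"
        using hermitian_of_adjoint[OF h2] by simp
      also have "P' *v (x - P' *v x) = 0"
        by (simp add: matrix_vector_mult_diff_distrib matrix_vector_mul_assoc h1)
      finally show "inner (x - P' *v x) w = 0" by (simp add: inner_cinner u)
    qed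
    then show ?thesis by (simp add: matrix_eq Pv)
  qed
  show ?thesis using P1 P2 P3 unq by blast
qed


lemma parseval_on:
  fixes U :: "'a::euclidean_space set"
  assumes fin: "finite U" and orth: "pairwise orthogonal U" and nrm: "\<And>u. u \<in> U \<Longrightarrow> norm u = 1"
    and y: "y \<in> span U"
  shows "inner y y = (\<Sum>u\<in>U. (inner u y)^2)"
proof -
  obtain c where yc: "y = (\<Sum>v\<in>U. c v *\<^sub>R v)"
    using y span_finite[OF fin] by auto
  have iu: "inner u y = c u" if "u \<in> U" for u
  proof -
    have "inner u y = (\<Sum>v\<in>U. c v * inner u v)" by (simp add: yc inner_sum_right)
    also have "\<dots> = (\<Sum>v\<in>U. if v = u then c v else 0)"
    proof (rule sum.cong[OF refl])
      fix v assume v: "v \<in> U"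
      show "c v * inner u v = (if v = u then c v else 0)"
      proof (cases "v = u")
        case True then show ?thesis using nrm[OF v] by (simp add: power2_eq_square dot_square_norm)
      next
        case False then show ?thesis using orth v that by (auto simp: pairwise_def orthogonal_def)
      qed
    qed
    also have "\<dots> = c u" using that fin by simp
    finally show ?thesis .
  qed
  have "inner y y = (\<Sum>v\<in>U. c v * inner v y)" by (subst (1) yc) (simp add: inner_sum_left)
  also have "\<dots> = (\<Sum>v\<in>U. (inner v y)^2)" by (intro sum.cong refl) (simp add: iu power2_eq_square)
  finally show ?thesis .
qed

lemma trace_proj_dim:
  fixes f :: "'a::euclidean_space \<Rightarrow> 'a"
  assumes B: "B \<subseteq> Basis" and lin: "linear f" and sa: "\<And>x y. inner (f x) y = inner x (f y)"
    and idem: "\<And>x. f (f x) = f x" and st: "f ` span B \<subseteq> span B"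
  shows "(\<Sum>b\<in>B. inner b (f b)) = real (dim (f ` span B))"
proof -
  let ?F = "f ` span B"
  have subF: "subspace ?F" using linear_subspace_image[OF lin subspace_span] .
  obtain U where U: "U \<subseteq> ?F" "pairwise orthogonal U" "\<And>x. x \<in> U \<Longrightarrow> norm x = 1"
    "independent U" "card U = dim ?F" "span U = ?F"
    using orthonormal_basis_subspace[OF subF] by blast
  have finU: "finite U" using U(4) independent_imp_finite by blast
  have finB: "finite B" using B finite_Basis finite_subset by blast
  have fixU: "f u = u" if "u \<in> U" for u using U(1) that idem by auto
  have b1: "inner b (f b) = (\<Sum>u\<in>U. (inner u b)^2)" if "b \<in> B" for b
  proof -
    have fbU: "f b \<in> span U" using U(6) that span_base[of b B] by blast
    have "inner b (f b) = inner (f b) (f b)" using sa[of b "f b"] idem[of b] by simp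
    also have "\<dots> = (\<Sum>u\<in>U. (inner u (f b))^2)" by (rule parseval_on[OF finU U(2) U(3) fbU])
    also have "\<dots> = (\<Sum>u\<in>U. (inner u b)^2)"
      by (intro sum.cong refl) (metis sa fixU inner_commute)
    finally show ?thesis .
  qed
  have u1: "(\<Sum>b\<in>B. (inner u b)^2) = 1" if "u \<in> U" for u
  proof -
    have uB: "u \<in> span B" using U(1) st that by blast
    have z: "inner u b = 0" if "b \<in> Basis - B" for b
    proof -
      have "orthogonal b u"
        by (rule orthogonal_to_span[OF uB]) (use that B in \<open>auto simp: orthogonal_def intro!: inner_not_same_Basis\<close>)
      then show ?thesis by (simp add: orthogonal_def inner_commute)
    qed
    have "(\<Sum>b\<in>B. (inner u b)^2) = (\<Sum>b\<in>Basis. (inner u b)^2)"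
      by (rule sum.mono_neutral_left) (use B z in auto)
    also have "\<dots> = inner u u" by (simp add: euclidean_inner[of u u] power2_eq_square)
    also have "\<dots> = 1" using U(3)[OF that] by (simp add: dot_square_norm)
    finally show ?thesis .
  qed
  have "(\<Sum>b\<in>B. inner b (f b)) = (\<Sum>b\<in>B. \<Sum>u\<in>U. (inner u b)^2)" by (intro sum.cong refl b1)
  also have "\<dots> = (\<Sum>u\<in>U. \<Sum>b\<in>B. (inner u b)^2)" by (rule sum.swap)
  also have "\<dots> = (\<Sum>u\<in>U. 1)" by (intro sum.cong refl u1)
  also have "\<dots> = real (dim ?F)" using U(5) by simp
  finally show ?thesis .
qed


definition Esp :: "real \<Rightarrow> 'n::finite qstate set" where
  "Esp c = {v. total_spin_sq *v v = complex_of_real c *s v}"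

lemma lss_def: "low_spin_space J = span (\<Union>j\<in>{j. 0 \<le> j \<and> j \<le> J}. Esp (j * (j + 1)))"
  unfolding low_spin_space_def Esp_def by simp

lemma scale_comm: "c *s (d *s v) = d *s (c *s (v :: complex ^ 'i))"
  by (simp add: vec_eq_iff mult_ac)

lemma Esp_scale: "v \<in> Esp c \<Longrightarrow> d *s v \<in> Esp c"
  unfolding Esp_def by (simp add: vector_scalar_commute scale_comm)

lemma Esp_Sm: "v \<in> Esp c \<Longrightarrow> Sm *v v \<in> Esp c"
  unfolding Esp_def by (simp add: S2_Sm vector_scalar_commute)

lemma Esp_Sz: "v \<in> Esp c \<Longrightarrow> Sz *v v \<in> Esp c"
  unfolding Esp_def by (simp add: S2_Sz vector_scalar_commute)

lemma H_stable_gen: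
  fixes f :: "'n::finite qstate \<Rightarrow> 'n qstate"
  assumes "linear f" "\<And>c v. v \<in> Esp c \<Longrightarrow> f v \<in> Esp c" "x \<in> low_spin_space J"
  shows "f x \<in> low_spin_space J"
proof -
  have "f x \<in> span (\<Union>j\<in>{j. 0 \<le> j \<and> j \<le> J}. Esp (j * (j + 1)))"
  proof (rule span_stable[of f _ x])
    show "linear f" by (rule assms(1))
    show "x \<in> span (\<Union>j\<in>{j. 0 \<le> j \<and> j \<le> J}. Esp (j * (j + 1)))" using assms(3) by (simp add: lss_def)
  qed (use assms(2) in blast)
  then show ?thesis by (simp add: lss_def)
qed

lemma H_scale: "x \<in> low_spin_space J \<Longrightarrow> c *s x \<in> low_spin_space J"
  by (rule H_stable_gen[OF linear_scale_vec]) (auto intro: Esp_scale)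
lemma H_Sm: "x \<in> low_spin_space J \<Longrightarrow> Sm *v x \<in> low_spin_space J"
  by (rule H_stable_gen[OF matrix_vector_mul_linear]) (auto intro: Esp_Sm)
lemma H_Sz: "x \<in> low_spin_space J \<Longrightarrow> Sz *v x \<in> low_spin_space J"
  by (rule H_stable_gen[OF matrix_vector_mul_linear]) (auto intro: Esp_Sz)
lemma H_sub: "subspace (low_spin_space J)"
  unfolding low_spin_space_def by (rule subspace_span)

lemma projJ:
  "(proj_J J :: 'n::finite qop) ** proj_J J = proj_J J \<and> adjoint_mat (proj_J J :: 'n qop) = proj_J J \<and>
   range (\<lambda>v. (proj_J J :: 'n qop) *v v) = (low_spin_space J :: 'n::finite qstate set)"
proof -
  have "\<exists>!P. P ** P = P \<and> adjoint_mat P = P \<and> range (\<lambda>v. P *v v) = (low_spin_space J :: 'n qstate set)"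
    by (rule proj_unique_exists[OF H_sub H_scale])
  note th = theI'[OF this]
  show ?thesis unfolding proj_J_def orth_proj_onto_def
    using th by simp
qed

lemma P_idem: "proj_J J *v (proj_J J *v x) = proj_J J *v x"
  using projJ[of J] by (metis matrix_vector_mul_assoc)
lemma P_in: "proj_J J *v x \<in> low_spin_space J"
  using projJ[of J] by blast
lemma P_fix: "y \<in> low_spin_space J \<Longrightarrow> proj_J J *v y = y"
  using projJ[of J] P_idem by (metis (no_types, lifting) imageE)
lemma P_herm: "cinner (proj_J J *v u) w = cinner u (proj_J J *v w)"
  using projJ[of J] hermitian_of_adjoint by blast

lemma cinner_self_eq0: "cinner v v = 0 \<Longrightarrow> v = (0::complex^'i::finite)"
proof -
  assume a: "cinner v v = 0"
  have "inner v v = 0" using a by (simp add: inner_cinner)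
  then show ?thesis by simp
qed

lemma V_stable:
  fixes A B :: "'n::finite qop"
  assumes adj: "\<And>u w. cinner (A *v u) w = cinner u (B *v w)"
    and HB: "\<And>x. x \<in> low_spin_space J \<Longrightarrow> B *v x \<in> low_spin_space J"
    and v: "proj_J J *v v = 0"
  shows "proj_J J *v (A *v v) = 0"
proof -
  let ?P = "proj_J J" let ?w = "?P *v (A *v v)"
  have "cinner ?w ?w = cinner (A *v v) (?P *v ?w)" by (rule P_herm)
  also have "?P *v ?w = ?w" by (rule P_idem)
  also have "cinner (A *v v) ?w = cinner v (B *v ?w)" by (rule adj)
  also have "B *v ?w = ?P *v (B *v ?w)" using P_fix[OF HB[OF P_in]] by simp
  also have "cinner v (?P *v (B *v ?w)) = cinner (?P *v v) (B *v ?w)" by (rule P_herm[symmetric])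
  finally have "cinner ?w ?w = 0" using v by simp
  then show ?thesis by (rule cinner_self_eq0)
qed

lemma V_Sz: "proj_J J *v v = 0 \<Longrightarrow> proj_J J *v (Sz *v v) = 0"
  by (rule V_stable[OF cinner_Sz H_Sz])
lemma V_Sp: "proj_J J *v v = 0 \<Longrightarrow> proj_J J *v (Sp *v v) = 0"
  by (rule V_stable[OF cinner_Sp H_Sm])

lemma P_Sz_comm: "proj_J J *v (Sz *v x) = Sz *v (proj_J J *v x)"
proof -
  let ?P = "proj_J J"
  have "x = ?P *v x + (x - ?P *v x)" by simp
  then have "Sz *v x = Sz *v (?P *v x) + Sz *v (x - ?P *v x)"
    by (metis matrix_vector_right_distrib)
  then have "?P *v (Sz *v x) = ?P *v (Sz *v (?P *v x)) + ?P *v (Sz *v (x - ?P *v x))"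
    by (simp add: matrix_vector_right_distrib)
  also have "?P *v (Sz *v (?P *v x)) = Sz *v (?P *v x)" by (rule P_fix[OF H_Sz[OF P_in]])
  also have "?P *v (Sz *v (x - ?P *v x)) = 0"
    by (rule V_Sz) (simp add: matrix_vector_mult_diff_distrib P_idem)
  finally show ?thesis by simp
qed


definition Wt :: "nat \<Rightarrow> 'n::finite qstate set" where
  "Wt t = {v. \<forall>a. cnt a \<noteq> t \<longrightarrow> v $ a = 0}"

definition Vt :: "real \<Rightarrow> nat \<Rightarrow> 'n::finite qstate set" where
  "Vt J t = {v. proj_J J *v v = 0} \<inter> Wt t"

lemma cnt_flip_F: "\<not> a k \<Longrightarrow> cnt (flip k a) = cnt a + 1"
  unfolding cnt_def by (simp add: T_flip_F)

lemma subspace_Wt: "subspace (Wt t)"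
  unfolding subspace_def Wt_def by auto

lemma mv_scaleR: "(A::complex^'i::finite^'j) *v (r *\<^sub>R v) = r *\<^sub>R (A *v v)"
  by (simp add: vec_eq_iff matrix_vector_mult_def scaleR_sum_right mult_scaleR_right)

lemma subspace_ker: "subspace {v. (A::'n::finite qop) *v v = 0}"
  unfolding subspace_def by (auto simp: matrix_vector_right_distrib mv_scaleR)

lemma subspace_Vt: "subspace (Vt J t)"
  unfolding Vt_def by (rule subspace_inter[OF subspace_ker subspace_Wt])

lemma wt_cnt: "wt a = real CARD('n::finite) / 2 - real (cnt (a :: 'n \<Rightarrow> bool))"
  by (simp add: wt_def)

lemma Wt_Sz: "v \<in> Wt t \<Longrightarrow> Sz *v v = complex_of_real (real CARD('n::finite) / 2 - real t) *s (v :: 'n qstate)"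
  unfolding Wt_def by (auto simp: vec_eq_iff Sz_apply wt_cnt field_simps)

lemma Sz_Wt:
  assumes "Sz *v v = complex_of_real (real CARD('n::finite) / 2 - real t) *s (v :: 'n qstate)"
  shows "v \<in> Wt t"
  unfolding Wt_def
proof (intro CollectI allI impI)
  fix a :: "'n \<Rightarrow> bool" assume ne: "cnt a \<noteq> t"
  let ?c = "complex_of_real (real CARD('n) / 2 - real t)"
  have e: "complex_of_real (wt a) * v $ a = ?c * v $ a"
    using arg_cong[OF assms, of "\<lambda>x. x $ a"] by (simp only: Sz_apply vector_scalar_mult_def vec_lambda_beta)
  have "wt a \<noteq> real CARD('n) / 2 - real t" using ne by (simp add: wt_cnt)
  then have "complex_of_real (wt a) \<noteq> ?c" by (simp only: of_real_eq_iff not_False_eq_True)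
  with e show "v $ a = 0" by (metis mult_cancel_right)
qed

lemma Sp_Wt: "v \<in> Wt (Suc s) \<Longrightarrow> Sp *v v \<in> Wt s"
  unfolding Wt_def by (auto simp: Sp_apply cnt_flip_F intro!: sum.neutral)

lemma Sp_Wt0: "v \<in> Wt 0 \<Longrightarrow> Sp *v v = 0"
  unfolding Wt_def by (auto simp: vec_eq_iff Sp_apply cnt_flip_F intro!: sum.neutral)

lemma Q_Wt: "(v :: 'n::finite qstate) \<in> Wt t \<Longrightarrow> v - proj_J J *v v \<in> Wt t"
proof -
  assume v: "v \<in> Wt t"
  let ?c = "complex_of_real (real CARD('n) / 2 - real t)"
  have "Sz *v (v - proj_J J *v v) = Sz *v v - proj_J J *v (Sz *v v)"
    by (simp add: matrix_vector_mult_diff_distrib P_Sz_comm)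
  also have "\<dots> = ?c *s v - proj_J J *v (?c *s v)"
    by (simp only: Wt_Sz[OF v])
  also have "\<dots> = ?c *s (v - proj_J J *v v)"
    by (simp only: vector_scalar_commute vector_ssub_ldistrib)
  finally show ?thesis by (rule Sz_Wt)
qed

lemma hw_zero:
  assumes ev: "even CARD('n::finite)" and v: "(v :: 'n qstate) \<in> Vt J t" and sp: "Sp *v v = 0"
    and bnd: "\<bar>real CARD('n) / 2 - real t\<bar> \<le> J"
  shows "v = 0"
proof -
  obtain h where hK: "CARD('n) = 2 * h" using ev by (metis evenE)
  define m where "m = real h - real t"
  have Km: "real CARD('n) / 2 - real t = m" unfolding m_def hK by simp
  have vW: "v \<in> Wt t" and vP: "proj_J J *v v = 0" using v by (auto simp: Vt_def)
  have sz: "Sz *v v = complex_of_real m *s v" using Wt_Sz[OF vW] Km by simp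
  have s2: "total_spin_sq *v v = complex_of_real (m * (m + 1)) *s v"
    by (rule highest_weight[OF sz sp])
  define j where "j = (if m \<ge> 0 then m else - m - 1)"
  have mint: "m \<le> -1" if "m < 0"
  proof -
    have "h < t" using that unfolding m_def by simp
    then have "h + 1 \<le> t" by simp
    then have "real (h + 1) \<le> real t" by (simp only: of_nat_le_iff)
    then show ?thesis unfolding m_def by simp
  qed
  have j0: "0 \<le> j" using mint unfolding j_def by auto
  have jJ: "j \<le> J" using bnd Km unfolding j_def by auto
  have jm: "j * (j + 1) = m * (m + 1)" unfolding j_def by (auto simp: algebra_simps)
  have "v \<in> Esp (j * (j + 1))" unfolding Esp_def using s2 jm by simp
  then have "v \<in> low_spin_space J" unfolding lss_def using j0 jJ
    by (intro span_base) blast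
  then have "proj_J J *v v = v" by (rule P_fix)
  then show ?thesis using vP by simp
qed

lemma dim_step:
  assumes ev: "even CARD('n::finite)" and bnd: "\<bar>real CARD('n) / 2 - real (Suc s)\<bar> \<le> J"
  shows "dim (Vt J (Suc s) :: 'n qstate set) \<le> dim (Vt J s :: 'n qstate set)"
proof -
  let ?f = "\<lambda>v::'n qstate. Sp *v v"
  have lin: "linear ?f" by (rule matrix_vector_mul_linear)
  have img: "?f ` Vt J (Suc s) \<subseteq> Vt J s"
    unfolding Vt_def using V_Sp Sp_Wt by blast
  have inj: "inj_on ?f (span (Vt J (Suc s)))"
  proof -
    have sp: "span (Vt J (Suc s)) = (Vt J (Suc s) :: 'n qstate set)" using subspace_Vt by simp
    show ?thesis unfolding sp
    proof (rule inj_onI)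
      fix x y :: "'n qstate" assume x: "x \<in> Vt J (Suc s)" and y: "y \<in> Vt J (Suc s)" and e: "Sp *v x = Sp *v y"
      have d: "x - y \<in> Vt J (Suc s)" using subspace_diff[OF subspace_Vt x y] .
      have "Sp *v (x - y) = 0" using e by (simp add: matrix_vector_mult_diff_distrib)
      then have "x - y = 0" by (rule hw_zero[OF ev d _ bnd])
      then show "x = y" by simp
    qed
  qed
  have "dim (Vt J (Suc s) :: 'n qstate set) = dim (?f ` Vt J (Suc s))" by (rule dim_image_eq[OF lin inj, symmetric])
  also have "\<dots> \<le> dim (Vt J s :: 'n qstate set)" by (rule dim_subset[OF img])
  finally show ?thesis .
qed

lemma dim_zero_step:
  assumes ev: "even CARD('n::finite)" and bnd: "\<bar>real CARD('n) / 2\<bar> \<le> J"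
  shows "dim (Vt J 0 :: 'n qstate set) = 0"
proof -
  have "Vt J 0 \<subseteq> (span {} :: 'n qstate set)"
  proof
    fix v :: "'n qstate" assume v: "v \<in> Vt J 0"
    have "Sp *v v = 0" using v by (auto simp: Vt_def intro: Sp_Wt0)
    then have "v = 0" by (rule hw_zero[OF ev v]) (use bnd in simp)
    then show "v \<in> span {}" by simp
  qed
  from dim_le_card[OF this] show ?thesis by simp
qed

lemma dim_chain:
  assumes step: "\<And>u. a < u \<Longrightarrow> u \<le> b \<Longrightarrow> dim (Vt J u :: 'n::finite qstate set) \<le> dim (Vt J (u - 1) :: 'n qstate set)"
    and ab: "a \<le> b"
  shows "dim (Vt J b :: 'n qstate set) \<le> dim (Vt J a :: 'n qstate set)"
  using ab step
proof (induction b)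
  case 0 then show ?case by simp
next
  case (Suc b)
  show ?case
  proof (cases "a = Suc b")
    case True then show ?thesis by simp
  next
    case False
    then have "a \<le> b" using Suc.prems by simp
    have "dim (Vt J (Suc b) :: 'n qstate set) \<le> dim (Vt J b :: 'n qstate set)"
      using Suc.prems(2)[of "Suc b"] False Suc.prems(1) by simp
    also have "\<dots> \<le> dim (Vt J a :: 'n qstate set)" using Suc.IH[OF \<open>a \<le> b\<close>] Suc.prems(2) by simp
    finally show ?thesis .
  qed
qed


definition At :: "nat \<Rightarrow> ('n::finite \<Rightarrow> bool) set" where
  "At t = {a. cnt a = t}"

definition Bt :: "nat \<Rightarrow> 'n::finite qstate set" where
  "Bt t = (\<lambda>a. axis a 1) ` At t \<union> (\<lambda>a. axis a \<i>) ` At t"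

lemma axis_decomp: "axis a c = Re c *\<^sub>R axis a (1::complex) + Im c *\<^sub>R axis a \<i>"
  by (simp add: vec_eq_iff axis_def complex_eq_iff)

lemma Bt_Basis: "Bt t \<subseteq> (Basis :: 'n::finite qstate set)"
  unfolding Bt_def Basis_vec_def Basis_complex_def by auto

lemma Bt_Wt: "Bt t \<subseteq> Wt t"
  unfolding Bt_def Wt_def At_def by (auto simp: axis_def)

lemma Wt_span: "Wt t \<subseteq> span (Bt t :: 'n::finite qstate set)"
proof
  fix v :: "'n qstate" assume v: "v \<in> Wt t"
  have eq: "v = (\<Sum>a\<in>At t. Re (v $ a) *\<^sub>R axis a 1 + Im (v $ a) *\<^sub>R axis a \<i>)"
  proof -
    have "(\<Sum>a\<in>At t. Re (v $ a) *\<^sub>R axis a 1 + Im (v $ a) *\<^sub>R axis a \<i>) = (\<Sum>a\<in>At t. axis a (v $ a))"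
      by (intro sum.cong refl) (rule axis_decomp[symmetric])
    also have "\<dots> = v"
    proof (subst vec_eq_iff, rule allI)
      fix b
      have "(\<Sum>a\<in>At t. axis a (v $ a)) $ b = (\<Sum>a\<in>At t. if a = b then v $ a else 0)"
        by (simp add: sum_component axis_def)
      also have "\<dots> = (if b \<in> At t then v $ b else 0)" by simp
      also have "\<dots> = v $ b" using v by (auto simp: Wt_def At_def)
      finally show "(\<Sum>a\<in>At t. axis a (v $ a)) $ b = v $ b" .
    qed
    finally show ?thesis by simp
  qed
  show "v \<in> span (Bt t)"
    by (subst eq, intro span_sum span_add span_scale span_base) (auto simp: Bt_def)
qed

lemma span_Bt: "span (Bt t) = (Wt t :: 'n::finite qstate set)"
  using Wt_span span_minimal[OF Bt_Wt subspace_Wt] by blast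

lemma card_Bt: "card (Bt t :: 'n::finite qstate set) \<le> 2 * card (At t :: ('n \<Rightarrow> bool) set)"
proof -
  have "card (Bt t :: 'n qstate set) \<le> card ((\<lambda>a::'n\<Rightarrow>bool. axis a (1::complex)) ` At t) + card ((\<lambda>a::'n\<Rightarrow>bool. axis a \<i>) ` At t)"
    unfolding Bt_def using card_Un_le by blast
  also have "\<dots> \<le> card (At t :: ('n \<Rightarrow> bool) set) + card (At t :: ('n \<Rightarrow> bool) set)"
    by (intro add_mono card_image_le) auto
  finally show ?thesis by simp
qed

lemma dim_Vt_le: "dim (Vt J t :: 'n::finite qstate set) \<le> 2 * card (At t :: ('n \<Rightarrow> bool) set)"
proof -
  have "Vt J t \<subseteq> span (Bt t :: 'n qstate set)" using Wt_span by (auto simp: Vt_def)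
  then have "dim (Vt J t :: 'n qstate set) \<le> card (Bt t :: 'n qstate set)" by (rule dim_le_card) (simp add: finite_subset[OF Bt_Basis])
  also note card_Bt
  finally show ?thesis .
qed

lemma cinner_axis_gen: "cinner (axis b c) w = cnj c * w $ b"
  unfolding cinner_def axis_def by (simp add: if_distrib if_distribR cong: if_cong)

lemma mat_axis_gen: "(A *v axis a c) $ b = A $ b $ a * c"
  unfolding matrix_vector_mult_def axis_def by (simp add: if_distrib if_distribR cong: if_cong)

lemma Fval: "inner (axis a c) ((A::complex^'i::finite^'i) *v axis a c) = Re (cnj c * c * A $ a $ a)"
  by (simp add: inner_cinner cinner_axis_gen mat_axis_gen mult_ac)

lemma trace_t:
  "2 * (\<Sum>a\<in>At t. Re ((mat 1 - (proj_J J :: 'n::finite qop)) $ a $ a)) = real (dim (Vt J t :: 'n qstate set))"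
proof -
  let ?P = "proj_J J :: 'n qop"
  let ?Q = "mat 1 - ?P"
  let ?q = "\<lambda>v::'n qstate. ?Q *v v"
  have qv: "?q v = v - ?P *v v" for v by (simp add: matrix_vector_mult_diff_rdistrib)
  have lin: "linear ?q" by (rule matrix_vector_mul_linear)
  have sa: "inner (?q x) y = inner x (?q y)" for x y
    unfolding qv inner_cinner cinner_diff_left cinner_diff_right P_herm ..
  have idem: "?q (?q x) = ?q x" for x
    unfolding qv by (simp add: matrix_vector_mult_diff_distrib P_idem)
  have img: "?q ` span (Bt t) = Vt J t"
  proof
    show "?q ` span (Bt t) \<subseteq> Vt J t"
      unfolding span_Bt Vt_def by (auto simp: qv Q_Wt matrix_vector_mult_diff_distrib P_idem)
    show "Vt J t \<subseteq> ?q ` span (Bt t)"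
    proof
      fix v :: "'n qstate" assume v: "v \<in> Vt J t"
      then have "v = ?q v" "v \<in> span (Bt t)" by (auto simp: qv Vt_def span_Bt)
      then show "v \<in> ?q ` span (Bt t)" by blast
    qed
  qed
  have st: "?q ` span (Bt t) \<subseteq> span (Bt t)" using img by (auto simp: Vt_def span_Bt)
  have tr: "(\<Sum>b\<in>Bt t. inner b (?q b)) = real (dim (Vt J t :: 'n qstate set))"
    using trace_proj_dim[OF Bt_Basis lin sa idem st] img by simp
  let ?F = "\<lambda>b. inner b (?q b)"
  have fin: "finite (At t :: ('n \<Rightarrow> bool) set)" by simp
  have disj: "(\<lambda>a::'n\<Rightarrow>bool. axis a (1::complex)) ` At t \<inter> (\<lambda>a. axis a \<i>) ` At t = {}"
    by (auto simp: axis_eq_axis)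
  have "(\<Sum>b\<in>Bt t. ?F b) = (\<Sum>b\<in>(\<lambda>a::'n\<Rightarrow>bool. axis a (1::complex)) ` At t. ?F b) + (\<Sum>b\<in>(\<lambda>a::'n\<Rightarrow>bool. axis a \<i>) ` At t. ?F b)"
    unfolding Bt_def by (rule sum.union_disjoint) (use disj in auto)
  also have "(\<Sum>b\<in>(\<lambda>a::'n\<Rightarrow>bool. axis a (1::complex)) ` At t. ?F b) = (\<Sum>a\<in>At t. ?F (axis a 1))"
    by (rule sum.reindex_cong[where l="\<lambda>a. axis a 1"]) (auto simp: inj_on_def axis_eq_axis)
  also have "(\<Sum>b\<in>(\<lambda>a::'n\<Rightarrow>bool. axis a \<i>) ` At t. ?F b) = (\<Sum>a\<in>At t. ?F (axis a \<i>))"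
    by (rule sum.reindex_cong[where l="\<lambda>a. axis a \<i>"]) (auto simp: inj_on_def axis_eq_axis)
  also have "(\<Sum>a\<in>At t. ?F (axis a 1)) = (\<Sum>a\<in>At t. Re (?Q $ a $ a))"
    by (intro sum.cong refl) (simp only: Fval, simp)
  also have "(\<Sum>a\<in>At t. ?F (axis a \<i>)) = (\<Sum>a\<in>At t. Re (?Q $ a $ a))"
    by (intro sum.cong refl) (simp only: Fval, simp)
  finally show ?thesis using tr by simp
qed


lemma trace_total:
  "2 * (\<Sum>a\<in>UNIV. Re ((mat 1 - (proj_J J :: 'n::finite qop)) $ a $ a)) = (\<Sum>t\<in>{..CARD('n)}. real (dim (Vt J t :: 'n qstate set)))"
proof -
  let ?f = "\<lambda>a. Re ((mat 1 - (proj_J J :: 'n qop)) $ a $ a)"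
  have cl: "cnt a \<le> CARD('n)" for a :: "'n \<Rightarrow> bool" unfolding cnt_def by (simp add: card_mono)
  have "(\<Sum>a\<in>UNIV. ?f a) = (\<Sum>t\<in>{..CARD('n)}. \<Sum>a\<in>{a\<in>UNIV. cnt a = t}. ?f a)"
    by (rule sum.group[symmetric]) (auto simp: cl)
  also have "\<dots> = (\<Sum>t\<in>{..CARD('n)}. \<Sum>a\<in>At t. ?f a)" by (simp add: At_def)
  finally have "2 * (\<Sum>a\<in>UNIV. ?f a) = (\<Sum>t\<in>{..CARD('n)}. 2 * (\<Sum>a\<in>At t. ?f a))"
    by (simp add: sum_distrib_left)
  also have "\<dots> = (\<Sum>t\<in>{..CARD('n)}. real (dim (Vt J t :: 'n qstate set)))"
    by (intro sum.cong refl trace_t)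
  finally show ?thesis .
qed

lemma card_At: "card (At t :: ('n::finite \<Rightarrow> bool) set) = CARD('n) choose t"
proof -
  have "bij_betw (\<lambda>a. {k. a k}) (At t :: ('n \<Rightarrow> bool) set) {B. B \<subseteq> (UNIV::'n set) \<and> card B = t}"
    by (rule bij_betw_byWitness[where f'="\<lambda>B k. k \<in> B"]) (auto simp: At_def cnt_def)
  then have "card (At t :: ('n \<Rightarrow> bool) set) = card {B. B \<subseteq> (UNIV::'n set) \<and> card B = t}"
    by (rule bij_betw_same_card)
  also have "\<dots> = CARD('n) choose t" by (rule n_subsets) simp
  finally show ?thesis .
qed

lemma cond_int:
  assumes J: "J \<ge> 0"
  shows "\<bar>real h - real u\<bar> \<le> J \<longleftrightarrow> \<bar>int h - int u\<bar> \<le> int (nat \<lfloor>J\<rfloor>)"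
proof -
  have "\<bar>real h - real u\<bar> = real_of_int \<bar>int h - int u\<bar>" by simp
  then have "\<bar>real h - real u\<bar> \<le> J \<longleftrightarrow> \<bar>int h - int u\<bar> \<le> \<lfloor>J\<rfloor>"
    by (simp only: le_floor_iff)
  also have "\<lfloor>J\<rfloor> = int (nat \<lfloor>J\<rfloor>)" using J by simp
  finally show ?thesis .
qed

lemma dim_bound_in:
  assumes ev: "even CARD('n::finite)" and J: "J \<ge> 0"
    and hdef: "h = CARD('n) div 2" and gdef: "g = nat \<lfloor>J\<rfloor>"
    and ct: "\<bar>int h - int t\<bar> \<le> int g"
  shows "dim (Vt J t :: 'n qstate set) \<le> (if g < h then 2 * (CARD('n) choose (h - g - 1)) else 0)"
proof -
  have Kh: "real CARD('n) / 2 = real h" using ev hdef by (auto elim!: evenE)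
  have cond: "\<bar>real CARD('n) / 2 - real u\<bar> \<le> J \<longleftrightarrow> \<bar>int h - int u\<bar> \<le> int g" for u
    unfolding Kh gdef by (rule cond_int[OF J])
  have step: "dim (Vt J u :: 'n qstate set) \<le> dim (Vt J (u - 1) :: 'n qstate set)"
    if h1: "\<bar>int h - int u\<bar> \<le> int g" and h2: "u \<ge> 1" for u
  proof -
    obtain s where u: "u = Suc s" using h2 by (cases u) auto
    show ?thesis unfolding u using dim_step[OF ev, of s J] h1 cond[of "Suc s"] u by simp
  qed
  show ?thesis
  proof (cases "g < h")
    case True
    let ?a = "h - g - 1"
    have "dim (Vt J t :: 'n qstate set) \<le> dim (Vt J ?a :: 'n qstate set)"
    proof (rule dim_chain)
      fix u assume "?a < u" "u \<le> t"
      then show "dim (Vt J u :: 'n qstate set) \<le> dim (Vt J (u - 1) :: 'n qstate set)"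
        using True ct by (intro step) auto
    next
      show "?a \<le> t" using True ct by auto
    qed
    also have "\<dots> \<le> 2 * card (At ?a :: ('n \<Rightarrow> bool) set)" by (rule dim_Vt_le)
    finally show ?thesis using True by (simp add: card_At)
  next
    case False
    have "dim (Vt J t :: 'n qstate set) \<le> dim (Vt J 0 :: 'n qstate set)"
    proof (rule dim_chain)
      fix u assume "0 < u" "u \<le> t"
      then show "dim (Vt J u :: 'n qstate set) \<le> dim (Vt J (u - 1) :: 'n qstate set)"
        using False ct by (intro step) auto
    qed simp
    also have "\<dots> = 0"
    proof (rule dim_zero_step[OF ev])
      have "\<bar>int h - int 0\<bar> \<le> int g" using False by simp
      then show "\<bar>real CARD('n) / 2\<bar> \<le> J" using cond[of 0] by simp
    qed
    finally show ?thesis using False by simp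
  qed
qed


lemma binom_tail_upper:
  fixes K :: nat and s :: real
  assumes K: "K > 0" and s: "s \<ge> 0"
  shows "(\<Sum>t\<in>{t. t \<le> K \<and> real t \<ge> real K / 2 + s}. real (K choose t)) / 2 ^ K \<le> exp (-2 * s\<^sup>2 / K)"
proof -
  interpret binomial_distribution K "1/2" by unfold_locales auto
  let ?A = "{t. t \<le> K \<and> real t \<ge> real K / 2 + s}"
  have pm: "pmf (binomial_pmf K (1/2)) t = real (K choose t) / 2 ^ K" if "t \<le> K" for t
  proof -
    have "pmf (binomial_pmf K (1/2)) t = real (K choose t) * ((1/2)^t * (1/2)^(K - t))"
      by (subst pmf_binomial) (auto simp: mult.assoc)
    also have "(1/2::real)^t * (1/2)^(K - t) = (1/2)^K" using that by (simp add: power_add[symmetric])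
    finally show ?thesis by (simp add: power_one_over divide_simps)
  qed
  have "(\<Sum>t\<in>?A. real (K choose t)) / 2 ^ K = (\<Sum>t\<in>?A. pmf (binomial_pmf K (1/2)) t)"
    unfolding sum_divide_distrib by (intro sum.cong refl) (simp only: pm mem_Collect_eq)
  also have "\<dots> = measure_pmf.prob (binomial_pmf K (1/2)) ?A"
    by (rule measure_measure_pmf_finite[symmetric]) simp
  also have "\<dots> \<le> measure_pmf.prob (binomial_pmf K (1/2)) {x. real x \<ge> real K * (1/2) + s}"
    by (rule measure_pmf.finite_measure_mono) auto
  also have "\<dots> \<le> exp (-2 * s\<^sup>2 / K)"
    by (rule prob_ge[OF K s])
  finally show ?thesis .
qed

lemma binom_tail_lower:
  fixes K :: nat and s :: real
  assumes K: "K > 0" and s: "s \<ge> 0"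
  shows "(\<Sum>t\<in>{t. t \<le> K \<and> real t \<le> real K / 2 - s}. real (K choose t)) / 2 ^ K \<le> exp (-2 * s\<^sup>2 / K)"
proof -
  interpret binomial_distribution K "1/2" by unfold_locales auto
  let ?A = "{t. t \<le> K \<and> real t \<le> real K / 2 - s}"
  have pm: "pmf (binomial_pmf K (1/2)) t = real (K choose t) / 2 ^ K" if "t \<le> K" for t
  proof -
    have "pmf (binomial_pmf K (1/2)) t = real (K choose t) * ((1/2)^t * (1/2)^(K - t))"
      by (subst pmf_binomial) (auto simp: mult.assoc)
    also have "(1/2::real)^t * (1/2)^(K - t) = (1/2)^K" using that by (simp add: power_add[symmetric])
    finally show ?thesis by (simp add: power_one_over divide_simps)
  qed
  have "(\<Sum>t\<in>?A. real (K choose t)) / 2 ^ K = (\<Sum>t\<in>?A. pmf (binomial_pmf K (1/2)) t)"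
    unfolding sum_divide_distrib by (intro sum.cong refl) (simp only: pm mem_Collect_eq)
  also have "\<dots> = measure_pmf.prob (binomial_pmf K (1/2)) ?A"
    by (rule measure_measure_pmf_finite[symmetric]) simp
  also have "\<dots> \<le> measure_pmf.prob (binomial_pmf K (1/2)) {x. real x \<le> real K * (1/2) - s}"
    by (rule measure_pmf.finite_measure_mono) auto
  also have "\<dots> \<le> exp (-2 * s\<^sup>2 / K)"
    by (rule prob_le[OF K s])
  finally show ?thesis .
qed


definition bnd :: "nat \<Rightarrow> nat \<Rightarrow> nat \<Rightarrow> nat \<Rightarrow> real" where
  "bnd K h g t = (if \<bar>int h - int t\<bar> \<le> int g then (if g < h then 2 * real (K choose (h - g - 1)) else 0)
                   else 2 * real (K choose t))"

lemma final_numeric: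
  fixes J :: real
  assumes Kh: "K = 2 * h" and h: "h > 0" and J: "J \<ge> 0" and g: "g = nat \<lfloor>J\<rfloor>"
  shows "(\<Sum>t\<in>{..K}. bnd K h g t) / 2 ^ K < 2 * (real K + 1) * exp (- 2 * J\<^sup>2 / real K)"
proof (cases "g < h")
  case False
  have "bnd K h g t = 0" if "t \<in> {..K}" for t
    using that False Kh unfolding bnd_def by auto
  then have "(\<Sum>t\<in>{..K}. bnd K h g t) = 0" by simp
  then show ?thesis by simp
next
  case True
  define s where "s = g + 1"
  have sh: "s \<le> h" using True s_def by simp
  have Kpos: "K > 0" using Kh h by simp
  have Js: "J < real s" unfolding s_def g using J by linarith
  define e where "e = exp (-2 * (real s)\<^sup>2 / real K)"
  define C where "C = {h - g..h + g}"
  define Up where "Up = {t. t \<le> K \<and> real t \<ge> real K / 2 + real s}"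
  define Lo where "Lo = {t. t \<le> K \<and> real t \<le> real K / 2 - real s}"
  have KC: "C \<subseteq> {..K}" unfolding C_def Kh using True by auto
  have condC: "\<bar>int h - int t\<bar> \<le> int g \<longleftrightarrow> t \<in> C" for t unfolding C_def using True by auto
  have rest: "{..K} - C = Up \<union> Lo" unfolding C_def Up_def Lo_def Kh s_def using True by auto
  have disj: "Up \<inter> Lo = {}" unfolding Up_def Lo_def s_def using Kpos by auto
  have cardC: "card C = 2 * g + 1" unfolding C_def using True by simp
  define b where "b = real (K choose (h - g - 1))"
  have "(\<Sum>t\<in>{..K}. bnd K h g t) = (\<Sum>t\<in>{..K}. if t \<in> C then 2 * b else 2 * real (K choose t))"
    unfolding bnd_def b_def using True condC by (intro sum.cong refl) auto
  also have "\<dots> = (\<Sum>t\<in>{..K} \<inter> C. 2 * b) + (\<Sum>t\<in>{..K} - C. 2 * real (K choose t))"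
    using sum.If_cases[of "{..K}" "\<lambda>t. t \<in> C" "\<lambda>_. 2 * b" "\<lambda>t. 2 * real (K choose t)"]
    by (simp add: Diff_eq)
  also have "{..K} \<inter> C = C" using KC by blast
  also have "(\<Sum>t\<in>{..K} - C. 2 * real (K choose t)) = (\<Sum>t\<in>Up. 2 * real (K choose t)) + (\<Sum>t\<in>Lo. 2 * real (K choose t))"
    unfolding rest by (rule sum.union_disjoint) (use disj in \<open>auto simp: Up_def Lo_def\<close>)
  finally have eq: "(\<Sum>t\<in>{..K}. bnd K h g t) = real (2 * g + 1) * (2 * b) + 2 * (\<Sum>t\<in>Up. real (K choose t)) + 2 * (\<Sum>t\<in>Lo. real (K choose t))"
    by (simp add: cardC sum_distrib_left)
  have up: "(\<Sum>t\<in>Up. real (K choose t)) \<le> 2 ^ K * e"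
    using binom_tail_upper[OF Kpos, of "real s"] unfolding Up_def e_def by (simp add: field_simps)
  have lo: "(\<Sum>t\<in>Lo. real (K choose t)) \<le> 2 ^ K * e"
    using binom_tail_lower[OF Kpos, of "real s"] unfolding Lo_def e_def by (simp add: field_simps)
  have bLo: "b \<le> (\<Sum>t\<in>Lo. real (K choose t))"
  proof -
    have "h - g - 1 \<in> Lo" unfolding Lo_def Kh s_def using True by auto
    then show ?thesis unfolding b_def by (intro member_le_sum) (auto simp: Lo_def)
  qed
  have "(\<Sum>t\<in>{..K}. bnd K h g t) \<le> real (2 * g + 1) * (2 * (2 ^ K * e)) + 2 * (2 ^ K * e) + 2 * (2 ^ K * e)"
    unfolding eq using up lo bLo by (intro add_mono mult_left_mono) auto
  also have "\<dots> = 2 ^ K * (2 * real (2 * s + 1) * e)" unfolding s_def by (simp add: algebra_simps)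
  finally have le: "(\<Sum>t\<in>{..K}. bnd K h g t) / 2 ^ K \<le> 2 * real (2 * s + 1) * e"
    by (simp add: field_simps)
  have "real (2 * s + 1) \<le> real K + 1" using sh Kh by simp
  moreover have "e < exp (- 2 * J\<^sup>2 / real K)"
  proof -
    have "J\<^sup>2 < (real s)\<^sup>2" using Js J by (intro power_strict_mono) auto
    then have "-2 * (real s)\<^sup>2 / real K < - 2 * J\<^sup>2 / real K" using Kpos by (simp add: divide_strict_right_mono)
    then show ?thesis unfolding e_def by simp
  qed
  moreover have "e > 0" unfolding e_def by simp
  ultimately have "2 * real (2 * s + 1) * e < 2 * (real K + 1) * exp (- 2 * J\<^sup>2 / real K)"
  proof -
    assume a1: "real (2 * s + 1) \<le> real K + 1" and a2: "e < exp (- 2 * J\<^sup>2 / real K)" and a3: "e > 0"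
    have "2 * real (2 * s + 1) * e \<le> 2 * (real K + 1) * e" using a1 a3 by (intro mult_right_mono) auto
    also have "\<dots> < 2 * (real K + 1) * exp (- 2 * J\<^sup>2 / real K)" using a2 by (intro mult_strict_left_mono) auto
    finally show ?thesis .
  qed
  with le show ?thesis by linarith
qed


definition Dflip :: "'i \<Rightarrow> complex ^ 'i ^ 'i" where
  "Dflip c = (\<chi> a b. if b = a then (if a = c then -1 else 1) else 0)"

definition tau :: "'i \<Rightarrow> 'i \<Rightarrow> 'i \<Rightarrow> 'i" where
  "tau c d a = (if a = c then d else if a = d then c else a)"

definition Swp :: "'i \<Rightarrow> 'i \<Rightarrow> complex ^ 'i ^ 'i" where
  "Swp c d = (\<chi> a b. if b = tau c d a then 1 else 0)"

lemma tau_tau[simp]: "tau c d (tau c d a) = a" by (auto simp: tau_def)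
lemma tau_eq: "a = tau c d x \<longleftrightarrow> x = tau c d a" by (auto simp: tau_def)

lemma Dflip_apply: "(Dflip c *v v) $ a = (if a = c then - v $ a else v $ a)"
  unfolding Dflip_def matrix_vector_mult_def by (simp only: vec_lambda_beta delta_sum) simp

lemma Swp_apply: "(Swp c d *v v) $ a = v $ tau c d a"
  unfolding Swp_def matrix_vector_mult_def by (simp only: vec_lambda_beta delta_sum) simp

lemma Dflip_unitary: "unitary_mat (Dflip c)"
proof -
  have "(\<Sum>x\<in>UNIV. cnj ((Dflip c) $ x $ a) * (Dflip c) $ x $ b) = (if a = b then 1 else 0)" for a b
  proof -
    have "(\<Sum>x\<in>UNIV. cnj ((Dflip c) $ x $ a) * (Dflip c) $ x $ b) = (\<Sum>x\<in>UNIV. if x = a then (if a = b then 1 else 0) else 0)"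
      by (intro sum.cong refl) (auto simp: Dflip_def)
    then show ?thesis by simp
  qed
  then show ?thesis
    unfolding unitary_mat_def by (simp add: vec_eq_iff matrix_matrix_mult_def adjoint_mat_def mat_def)
qed

lemma Swp_unitary: "unitary_mat (Swp c d)"
proof -
  have "(\<Sum>x\<in>UNIV. cnj ((Swp c d) $ x $ a) * (Swp c d) $ x $ b) = (if a = b then 1 else 0)" for a b
  proof -
    have "(\<Sum>x\<in>UNIV. cnj ((Swp c d) $ x $ a) * (Swp c d) $ x $ b) = (\<Sum>x\<in>UNIV. if x = tau c d a then (if a = b then 1 else 0) else 0)"
      by (intro sum.cong refl) (auto simp: Swp_def tau_eq)
    then show ?thesis by simp
  qed
  then show ?thesis
    unfolding unitary_mat_def by (simp add: vec_eq_iff matrix_matrix_mult_def adjoint_mat_def mat_def)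
qed

lemma cinner_self_real: "cinner v v = complex_of_real (inner v (v :: complex ^ 'i))"
  unfolding cinner_def inner_vec_def inner_complex_def
  by (simp add: complex_eq_iff Re_sum Im_sum power2_eq_square)

context
  fixes M :: "(complex ^ 'i::finite) measure"
  assumes UI: "unitarily_invariant_pure_state_measure M"
begin

lemma M_prob: "prob_space M" using UI unfolding unitarily_invariant_pure_state_measure_def by blast
lemma M_sets: "sets M = sets borel" using UI unfolding unitarily_invariant_pure_state_measure_def by blast
lemma M_space: "space M = UNIV" using sets_eq_imp_space_eq[OF M_sets] by simp
lemma M_fin: "finite_measure M" using M_prob by (simp add: prob_space_def)

lemma M_meas: "continuous_on UNIV f \<Longrightarrow> f \<in> borel_measurable M"
  using measurable_cong_sets[OF M_sets refl] borel_measurable_continuous_onI by blast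

lemma M_unit: "AE v in M. norm v = 1"
proof -
  have "emeasure M (sphere 0 1) = 1" using UI unfolding unitarily_invariant_pure_state_measure_def by blast
  then have "measure M (sphere 0 1) = 1" by (simp add: measure_def)
  then have "AE v in M. v \<in> sphere 0 1" by (rule prob_space.AE_prob_1[OF M_prob])
  then show ?thesis by (rule AE_mp) (auto simp: dist_norm)
qed

lemma M_integrable:
  fixes f :: "complex ^ 'i \<Rightarrow> 'b::{banach, second_countable_topology}"
  assumes c: "continuous_on UNIV f" and b: "\<And>v. norm v = 1 \<Longrightarrow> norm (f v) \<le> 1"
  shows "integrable M f"
proof (rule Bochner_Integration.integrable_bound)
  show "integrable M (\<lambda>v. 1::real)" by (rule finite_measure.integrable_const[OF M_fin])
  show "f \<in> borel_measurable M" by (rule M_meas[OF c])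
  show "AE x in M. norm (f x) \<le> norm (1::real)" using M_unit by (rule AE_mp) (auto intro: b)
qed

lemma M_invariant:
  fixes f :: "complex ^ 'i \<Rightarrow> 'b::{banach, second_countable_topology}"
  assumes U: "unitary_mat U" and c: "continuous_on UNIV f"
  shows "integral\<^sup>L M f = integral\<^sup>L M (\<lambda>v. f (U *v v))"
proof -
  have D: "distr M borel (\<lambda>v. U *v v) = M" using UI U unfolding unitarily_invariant_pure_state_measure_def by blast
  have T: "(\<lambda>v. U *v v) \<in> M \<rightarrow>\<^sub>M borel" by (rule M_meas) (intro continuous_intros)
  have "integral\<^sup>L M f = integral\<^sup>L (distr M borel (\<lambda>v. U *v v)) f" by (simp only: D)
  also have "\<dots> = integral\<^sup>L M (\<lambda>v. f (U *v v))"
    by (rule integral_distr[OF T borel_measurable_continuous_onI[OF c]])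
  finally show ?thesis .
qed



lemma int_fab: "integrable M (\<lambda>v. cnj (v $ a) * v $ b)"
proof (rule M_integrable)
  show "continuous_on UNIV (\<lambda>v::complex^'i. cnj (v $ a) * v $ b)" by (intro continuous_intros)
  fix v :: "complex ^ 'i" assume n: "norm v = 1"
  have "norm (cnj (v $ a) * v $ b) = norm (v $ a) * norm (v $ b)" by (simp add: norm_mult)
  also have "\<dots> \<le> norm v * norm v"
    by (intro mult_mono Finite_Cartesian_Product.norm_nth_le) auto
  finally show "norm (cnj (v $ a) * v $ b) \<le> 1" using n by simp
qed

lemma E_offdiag:
  assumes "a \<noteq> b"
  shows "integral\<^sup>L M (\<lambda>v. cnj (v $ a) * v $ b) = 0"
proof -
  have "integral\<^sup>L M (\<lambda>v. cnj (v $ a) * v $ b) = integral\<^sup>L M (\<lambda>v. cnj ((Dflip a *v v) $ a) * (Dflip a *v v) $ b)"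
    by (rule M_invariant[OF Dflip_unitary]) (intro continuous_intros)
  also have "\<dots> = integral\<^sup>L M (\<lambda>v. - (cnj (v $ a) * v $ b))"
    using assms by (simp add: Dflip_apply)
  also have "\<dots> = - integral\<^sup>L M (\<lambda>v. cnj (v $ a) * v $ b)" by (rule integral_minus)
  finally show ?thesis by simp
qed

lemma E_diag_eq: "integral\<^sup>L M (\<lambda>v. cnj (v $ a) * v $ a) = integral\<^sup>L M (\<lambda>v. cnj (v $ b) * v $ b)"
proof -
  have "integral\<^sup>L M (\<lambda>v. cnj (v $ a) * v $ a) = integral\<^sup>L M (\<lambda>v. cnj ((Swp a b *v v) $ a) * (Swp a b *v v) $ a)"
    by (rule M_invariant[OF Swp_unitary]) (intro continuous_intros)
  also have "\<dots> = integral\<^sup>L M (\<lambda>v. cnj (v $ b) * v $ b)"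
    by (simp add: Swp_apply tau_def)
  finally show ?thesis .
qed

lemma E_diag_sum: "(\<Sum>a\<in>UNIV. integral\<^sup>L M (\<lambda>v. cnj (v $ a) * v $ a)) = 1"
proof -
  have "(\<Sum>a\<in>UNIV. integral\<^sup>L M (\<lambda>v. cnj (v $ a) * v $ a)) = integral\<^sup>L M (\<lambda>v. \<Sum>a\<in>UNIV. cnj (v $ a) * v $ a)"
    by (rule Bochner_Integration.integral_sum[symmetric]) (rule int_fab)
  also have "\<dots> = integral\<^sup>L M (\<lambda>v. 1)"
  proof (rule integral_cong_AE)
    show "(\<lambda>v. \<Sum>a\<in>UNIV. cnj (v $ a) * v $ a) \<in> borel_measurable M"
      by (rule M_meas) (intro continuous_intros)
    show "(\<lambda>v. 1) \<in> borel_measurable M" by simp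
    show "AE v in M. (\<Sum>a\<in>UNIV. cnj (v $ a) * v $ a) = 1"
      using M_unit
    proof (rule AE_mp, intro AE_I2 impI)
      fix v :: "complex ^ 'i" assume n: "norm v = 1"
      have "(\<Sum>a\<in>UNIV. cnj (v $ a) * v $ a) = cinner v v" by (simp add: cinner_def)
      also have "\<dots> = complex_of_real (inner v v)" by (rule cinner_self_real)
      also have "inner v v = 1" using n by (simp add: power2_norm_eq_inner[symmetric])
      finally show "(\<Sum>a\<in>UNIV. cnj (v $ a) * v $ a) = 1" by simp
    qed
  qed
  also have "\<dots> = 1" using prob_space.prob_space[OF M_prob] by (simp add: lebesgue_integral_const)
  finally show ?thesis .
qed

lemma E_diag: "integral\<^sup>L M (\<lambda>v. cnj (v $ a) * v $ a) = 1 / of_nat CARD('i)"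
proof -
  have "(\<Sum>b\<in>UNIV. integral\<^sup>L M (\<lambda>v. cnj (v $ b) * v $ b)) = of_nat CARD('i) * integral\<^sup>L M (\<lambda>v. cnj (v $ a) * v $ a)"
  proof -
    have "(\<Sum>b\<in>UNIV. integral\<^sup>L M (\<lambda>v. cnj (v $ b) * v $ b)) = (\<Sum>b\<in>(UNIV::'i set). integral\<^sup>L M (\<lambda>v. cnj (v $ a) * v $ a))"
      by (intro sum.cong refl) (rule E_diag_eq)
    then show ?thesis by simp
  qed
  then show ?thesis using E_diag_sum by (simp add: field_simps)
qed

lemma E_cinner: "integral\<^sup>L M (\<lambda>v. cinner v (A *v v)) = mtrace A / of_nat CARD('i)"
proof -
  have eq: "cinner v (A *v v) = (\<Sum>a\<in>UNIV. \<Sum>b\<in>UNIV. A $ a $ b * (cnj (v $ a) * v $ b))" for v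
    unfolding cinner_def matrix_vector_mult_def by (simp add: sum_distrib_left mult_ac)
  have "integral\<^sup>L M (\<lambda>v. cinner v (A *v v)) = integral\<^sup>L M (\<lambda>v. \<Sum>a\<in>UNIV. \<Sum>b\<in>UNIV. A $ a $ b * (cnj (v $ a) * v $ b))"
    by (simp only: eq)
  also have "\<dots> = (\<Sum>a\<in>UNIV. \<Sum>b\<in>UNIV. A $ a $ b * integral\<^sup>L M (\<lambda>v. cnj (v $ a) * v $ b))"
    by (simp add: Bochner_Integration.integral_sum Bochner_Integration.integrable_sum int_fab integral_mult_right_zero)
  also have "\<dots> = (\<Sum>a\<in>UNIV. A $ a $ a / of_nat CARD('i))"
  proof (rule sum.cong[OF refl])
    fix a
    have "(\<Sum>b\<in>UNIV. A $ a $ b * integral\<^sup>L M (\<lambda>v. cnj (v $ a) * v $ b)) = (\<Sum>b\<in>UNIV. if b = a then A $ a $ a / of_nat CARD('i) else 0)"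
      by (intro sum.cong refl) (auto simp: E_offdiag E_diag)
    then show "(\<Sum>b\<in>UNIV. A $ a $ b * integral\<^sup>L M (\<lambda>v. cnj (v $ a) * v $ b)) = A $ a $ a / of_nat CARD('i)" by simp
  qed
  also have "\<dots> = mtrace A / of_nat CARD('i)" by (simp add: mtrace_def sum_divide_distrib)
  finally show ?thesis .
qed

lemma int_cinner: "integrable M (\<lambda>v. cinner v (A *v v))"
proof -
  have eq: "(\<lambda>v. cinner v (A *v v)) = (\<lambda>v. \<Sum>a\<in>UNIV. \<Sum>b\<in>UNIV. A $ a $ b * (cnj (v $ a) * v $ b))"
    unfolding cinner_def matrix_vector_mult_def by (simp add: sum_distrib_left mult_ac)
  show ?thesis unfolding eq
    by (intro Bochner_Integration.integrable_sum integrable_mult_right int_fab)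
qed

lemma E_Re: "integral\<^sup>L M (\<lambda>v. Re (cinner v (A *v v))) = Re (mtrace A) / real CARD('i)"
  using integral_Re[OF int_cinner[of A]] E_cinner[of A] by simp

end


lemma outer_apply: "outer \<psi> *v w = cinner \<psi> w *s (\<psi> :: complex ^ 'i::finite)"
  unfolding outer_def cinner_def matrix_vector_mult_def
  by (simp add: vec_eq_iff sum_distrib_left mult_ac)

lemma mtrace_outer: "mtrace (A ** outer \<psi>) = cinner \<psi> (A *v (\<psi> :: complex ^ 'i::finite))"
  unfolding mtrace_def outer_def cinner_def matrix_vector_mult_def matrix_matrix_mult_def
  by (simp add: sum_distrib_left mult_ac)

lemma fid_bound:
  fixes \<psi> :: "'n::finite qstate"
  assumes dens: "density_matrix \<rho>0" and n: "norm \<psi> = 1"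
  shows "1 - fidelity J \<rho>0 \<psi> \<le> 2 * Re (cinner \<psi> ((mat 1 - proj_J J) *v \<psi>))"
proof -
  let ?P = "proj_J J :: 'n qop"
  define x where "x = cinner \<psi> (?P *v \<psi>)"
  define t where "t = mtrace ((mat 1 - ?P) ** outer \<psi>)"
  define c where "c = cinner \<psi> (\<rho>0 *v \<psi>)"
  define r where "r = inner (?P *v \<psi>) (?P *v \<psi>)"
  have one: "cinner \<psi> \<psi> = 1"
    using cinner_self_real[of \<psi>] n by (simp add: power2_norm_eq_inner[symmetric])
  have Ev: "encoding_channel J \<rho>0 (outer \<psi>) *v \<psi> = x *s (?P *v \<psi>) + t *s (\<rho>0 *v \<psi>)"
    unfolding encoding_channel_def t_def x_def
    by (simp add: matrix_vector_mult_add_rdistrib matrix_vector_mul_assoc[symmetric] smult_mat_apply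
        outer_apply vector_scalar_commute)
  have F: "fidelity J \<rho>0 \<psi> = Re (x * x + t * c)"
    unfolding fidelity_def Ev c_def
    by (simp add: cinner_add_right cinner_scale_right x_def)
  have xr: "x = complex_of_real r"
  proof -
    have "x = cinner \<psi> (?P *v (?P *v \<psi>))" unfolding x_def P_idem ..
    also have "\<dots> = cinner (?P *v \<psi>) (?P *v \<psi>)" by (rule P_herm[symmetric])
    also have "\<dots> = complex_of_real r" unfolding r_def by (rule cinner_self_real)
    finally show ?thesis .
  qed
  have tQ: "t = cinner \<psi> ((mat 1 - ?P) *v \<psi>)" unfolding t_def by (rule mtrace_outer)
  have t1: "t = 1 - x" unfolding tQ x_def
    by (simp add: matrix_vector_mult_diff_rdistrib cinner_diff_right one)
  have r0: "r \<ge> 0" unfolding r_def by simp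
  have r1: "r \<le> 1"
  proof -
    let ?q = "\<psi> - ?P *v \<psi>"
    have "cinner ?q ?q = cinner \<psi> \<psi> - cinner \<psi> (?P *v \<psi>) - cinner (?P *v \<psi>) \<psi> + cinner (?P *v \<psi>) (?P *v \<psi>)"
      by (simp add: cinner_diff_left cinner_diff_right)
    also have "cinner (?P *v \<psi>) \<psi> = x" unfolding x_def by (rule P_herm)
    also have "cinner (?P *v \<psi>) (?P *v \<psi>) = x" using xr r_def cinner_self_real by metis
    finally have "cinner ?q ?q = 1 - x" unfolding x_def[symmetric] one by simp
    then have "complex_of_real (inner ?q ?q) = 1 - complex_of_real r" using cinner_self_real xr by metis
    then have "inner ?q ?q = 1 - r" by (metis of_real_1 of_real_diff of_real_eq_iff)
    then show ?thesis using inner_ge_zero[of ?q] by linarith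
  qed
  have c0: "Re c \<ge> 0" using dens unfolding density_matrix_def c_def by blast
  have Fr: "fidelity J \<rho>0 \<psi> = r * r + (1 - r) * Re c"
    unfolding F t1 xr by simp
  have Rq: "Re (cinner \<psi> ((mat 1 - ?P) *v \<psi>)) = 1 - r"
  proof -
    have "cinner \<psi> ((mat 1 - ?P) *v \<psi>) = 1 - complex_of_real r" using tQ t1 xr by simp
    then show ?thesis by simp
  qed
  have "(1 - r) * Re c \<ge> 0" using r1 c0 by simp
  then have "1 - fidelity J \<rho>0 \<psi> \<le> 1 - r * r" unfolding Fr by simp
  also have "\<dots> \<le> 2 * (1 - r)"
  proof -
    have h: "0 \<le> (1 - r) * (1 - r)" by simp
    then show ?thesis by (simp add: algebra_simps)
  qed
  finally show ?thesis unfolding Rq .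
qed


lemma cont_cinner: "continuous_on UNIV (\<lambda>v::complex^'i::finite. cinner v (A *v v))"
  unfolding cinner_def by (intro continuous_intros)

lemma Q_nonneg: "Re (cinner \<psi> ((mat 1 - proj_J J) *v \<psi>)) \<ge> 0"
proof -
  let ?P = "proj_J J" let ?q = "\<psi> - ?P *v \<psi>"
  have "cinner \<psi> ((mat 1 - ?P) *v \<psi>) = cinner ?q ?q + cinner (?P *v \<psi>) ?q"
    by (simp add: matrix_vector_mult_diff_rdistrib cinner_diff_left)
  also have "cinner (?P *v \<psi>) ?q = 0"
    by (simp add: P_herm cinner_diff_right matrix_vector_mult_diff_distrib P_idem)
  finally show ?thesis by (simp add: cinner_self_real)
qed

lemma card_states: "CARD('n::finite \<Rightarrow> bool) = 2 ^ CARD('n)"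
  by (simp add: card_fun)

lemma dim_le_bnd:
  assumes ev: "even CARD('n::finite)" and J: "J \<ge> 0" and hdef: "h = CARD('n) div 2"
  shows "real (dim (Vt J t :: 'n qstate set)) \<le> bnd CARD('n) h (nat \<lfloor>J\<rfloor>) t"
proof (cases "\<bar>int h - int t\<bar> \<le> int (nat \<lfloor>J\<rfloor>)")
  case True
  then show ?thesis using dim_bound_in[OF ev J hdef refl True] unfolding bnd_def
    by (auto simp: of_nat_mult[symmetric] simp del: of_nat_mult)
next
  case False
  have "dim (Vt J t :: 'n qstate set) \<le> 2 * (CARD('n) choose t)"
    using dim_Vt_le[of J t, where 'n='n] card_At[of t, where 'n='n] by simp
  then have "real (dim (Vt J t :: 'n qstate set)) \<le> 2 * real (CARD('n) choose t)"
    by (metis of_nat_le_iff of_nat_mult of_nat_numeral)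
  then show ?thesis using False unfolding bnd_def by simp
qed

theorem theorem1:
  fixes J :: real and \<epsilon> :: real
    and \<rho>0 :: "'n::finite qop"
    and M :: "'n qstate measure"
  assumes "even CARD('n)"
    and "J \<ge> 0"
    and "\<epsilon> > 0"
    and "density_matrix \<rho>0"
    and "range (\<lambda>v. \<rho>0 *v v) \<subseteq> low_spin_space J"
    and "unitarily_invariant_pure_state_measure M"
  shows "measure M {\<psi> \<in> space M. fidelity J \<rho>0 \<psi> < 1 - \<epsilon>}
           < 2 * (real CARD('n) + 1) / \<epsilon> * exp (- 2 * J\<^sup>2 / real CARD('n))"
proof -
  note ev = assms(1) and J = assms(2) and eps = assms(3) and dens = assms(4) and UI = assms(6)
  let ?K = "CARD('n)"
  let ?Q = "mat 1 - proj_J J :: 'n qop"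
  define g where "g \<psi> = 2 * Re (cinner \<psi> (?Q *v \<psi>))" for \<psi> :: "'n qstate"
  obtain h where Kh: "?K = 2 * h" using ev by (metis evenE)
  have hpos: "h > 0" using Kh by (metis mult_0_right neq0_conv zero_less_card_finite)
  have hdef: "h = ?K div 2" using Kh by simp
  have gcont: "continuous_on UNIV g" unfolding g_def by (intro continuous_intros cont_cinner)
  have gm[measurable]: "g \<in> borel_measurable M" by (rule M_meas[OF UI gcont])
  have gint: "integrable M g"
    unfolding g_def by (intro integrable_mult_right integrable_Re int_cinner[OF UI])
  have gnn: "AE x in M. 0 \<le> g x" unfolding g_def by (intro AE_I2) (simp add: Q_nonneg)
  have step1: "measure M {\<psi> \<in> space M. fidelity J \<rho>0 \<psi> < 1 - \<epsilon>} \<le> measure M {\<psi> \<in> space M. \<epsilon> \<le> g \<psi>}"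
  proof (rule finite_measure.finite_measure_mono_AE[OF M_fin[OF UI]])
    show "{\<psi> \<in> space M. \<epsilon> \<le> g \<psi>} \<in> sets M" by measurable
    show "AE x\<in>{\<psi> \<in> space M. fidelity J \<rho>0 \<psi> < 1 - \<epsilon>} in M. x \<in> {\<psi> \<in> space M. \<epsilon> \<le> g \<psi>}"
      using M_unit[OF UI]
    proof (rule AE_mp, intro AE_I2 impI)
      fix x assume x: "x \<in> space M" and n: "norm x = 1" and xa: "x \<in> {\<psi> \<in> space M. fidelity J \<rho>0 \<psi> < 1 - \<epsilon>}"
      have "1 - fidelity J \<rho>0 x \<le> g x" unfolding g_def by (rule fid_bound[OF dens n])
      then show "x \<in> {\<psi> \<in> space M. \<epsilon> \<le> g \<psi>}" using xa x by auto
    qed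
  qed
  have step2: "measure M {\<psi> \<in> space M. \<epsilon> \<le> g \<psi>} \<le> integral\<^sup>L M g / \<epsilon>"
    by (rule integral_Markov_inequality_measure[OF gint sets.top gnn eps])
  have int_g: "integral\<^sup>L M g = 2 * Re (mtrace ?Q) / real CARD('n \<Rightarrow> bool)"
  proof -
    have "integral\<^sup>L M g = 2 * integral\<^sup>L M (\<lambda>\<psi>. Re (cinner \<psi> (?Q *v \<psi>)))"
      unfolding g_def by (rule integral_mult_right_zero)
    also have "\<dots> = 2 * (Re (mtrace ?Q) / real CARD('n \<Rightarrow> bool))" by (simp only: E_Re[OF UI])
    finally show ?thesis by simp
  qed
  have tr: "2 * Re (mtrace ?Q) = (\<Sum>t\<in>{..?K}. real (dim (Vt J t :: 'n qstate set)))"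
    using trace_total[of J, where 'n='n] by (simp add: mtrace_def Re_sum)
  have trb: "(\<Sum>t\<in>{..?K}. real (dim (Vt J t :: 'n qstate set))) \<le> (\<Sum>t\<in>{..?K}. bnd ?K h (nat \<lfloor>J\<rfloor>) t)"
    by (intro sum_mono dim_le_bnd[OF ev J hdef])
  have fin: "(\<Sum>t\<in>{..?K}. bnd ?K h (nat \<lfloor>J\<rfloor>) t) / 2 ^ ?K < 2 * (real ?K + 1) * exp (- 2 * J\<^sup>2 / real ?K)"
    by (rule final_numeric[OF Kh hpos J refl])
  have "measure M {\<psi> \<in> space M. fidelity J \<rho>0 \<psi> < 1 - \<epsilon>} \<le> integral\<^sup>L M g / \<epsilon>"
    using step1 step2 by linarith
  also have "integral\<^sup>L M g = (\<Sum>t\<in>{..?K}. real (dim (Vt J t :: 'n qstate set))) / 2 ^ ?K"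
    unfolding int_g tr card_states by simp
  also have "\<dots> / \<epsilon> \<le> ((\<Sum>t\<in>{..?K}. bnd ?K h (nat \<lfloor>J\<rfloor>) t) / 2 ^ ?K) / \<epsilon>"
    using trb eps by (intro divide_right_mono) auto
  also have "\<dots> < (2 * (real ?K + 1) * exp (- 2 * J\<^sup>2 / real ?K)) / \<epsilon>"
    using fin eps by (intro divide_strict_right_mono) auto
  also have "\<dots> = 2 * (real ?K + 1) / \<epsilon> * exp (- 2 * J\<^sup>2 / real ?K)" by simp
  finally show ?thesis .
qed


end
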